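(* Consider the system $x(k+1)=Ax(k)+Bu(k)$ with $A\in\mathbb{R}^{n\times n}$, $B\in\mathbb{R}^{n\times m}$ and $(A,B)$ controllable. Let $\{u_i^{[0,T_i-1]},x_i^{[0,T_i-1]}\}_{i=1}^p$ be $p$ input-state trajectories of this system, let $L\ge1$, and let $\alpha_1,\dots,\alpha_p$ be any nonzero real weights (used in all matrices below). Call a pair $(\bar x^{[0,L-1]},\bar u^{[0,L-1]})$ an $L$-long input-state trajectory if $\bar x(k+1)=A\bar x(k)+B\bar u(k)$ for $k=0,\dots,L-2$; write $\bar x^{[0,L-1]}$, $\bar u^{[0,L-1]}$ also for the stacked column vectors. 1) If $T_1=\dots=T_p=T_0$ and $\{u_i^{[0,T_0-1]}\}_{i=1}^p$ are CCPE of order $L+n$, then for every $L$-long input-state trajectory there is a real vector $g$ with $\begin{bmatrix}\bar x^{[0,L-1]}\\ \bar u^{[0,L-1]}\end{bmatrix}=\begin{bmatrix}H_L^{cum}(\{x_i^{[0,T_0-1]}\}_{i=1}^p)\\ H_L^{cum}(\{u_i^{[0,T_0-1]}\}_{i=1}^p)\end{bmatrix}g$. 2) If $\{u_i^{[0,T_i-1]}\}_{i=1}^p$ are MCPE of order $L+n$, then for every $L$-long input-state trajectory there is a real vector $g$ with $\begin{bmatrix}\bar x^{[0,L-1]}\\ \bar u^{[0,L-1]}\end{bmatrix}=\begin{bmatrix}H_L^{mos}(\{x_i^{[0,T_i-1]}\}_{i=1}^p)\\ H_L^{mos}(\{u_i^{[0,T_i-1]}\}_{i=1}^p)\end{bmatrix}g$.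 3) If $T_1=\dots=T_{\bar p}=T_0$ and $\{u_i^{[0,T_i-1]}\}_{i=1}^p$ are HCPE of order $L+n$ (cumulative part $u_1,\dots,u_{\bar p}$), then for every $L$-long input-state trajectory there is a real vector $g$ with $\begin{bmatrix}\bar x^{[0,L-1]}\\ \bar u^{[0,L-1]}\end{bmatrix}=\begin{bmatrix}H_L^{hyb}(\{x_i^{[0,T_i-1]}\}_{i=1}^p)\\ H_L^{hyb}(\{u_i^{[0,T_i-1]}\}_{i=1}^p)\end{bmatrix}g$.
   Context: For a sequence $z^{[0,T-1]}$ with $z(k)\in\mathbb{R}^q$ and $L\le T$, $H_L(z^{[0,T-1]})\in\mathbb{R}^{qL\times(T-L+1)}$ is the block Hankel matrix with $(r,c)$ block entry $z(r+c)$. With nonzero weights $\alpha_i$: $H_L^{mos}(\{z_i\}_{i=1}^p)=[\alpha_1H_L(z_1)\ \cdots\ \alpha_pH_L(z_p)]$; for equal-length sequences $H_L^{cum}(\{z_i\}_{i=1}^p)=\sum_i\alpha_iH_L(z_i)$; $H_L^{hyb}(\{z_i\}_{i=1}^p)=[H_L^{cum}(\{z_i\}_{i=1}^{\bar p})\ \ H_L^{mos}(\{z_i\}_{i=\bar p+1}^p)]$ with $z_1,\dots,z_{\bar p}$ of equal length. Input signals $u_i\in\mathbb{R}^m$ are MCPE (resp. CCPE, HCPE) of order $K$ if $H_K^{mos}$ (resp. $H_K^{cum}$, $H_K^{hyb}$) of the input sequences has full row rank $mK$ for every choice of nonzero weights. *)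

theory Defs
  imports "Jordan_Normal_Form.DL_Rank"
begin

definition mat_rank :: "real mat \<Rightarrow> nat" where
  "mat_rank A = vec_space.rank (dim_row A) A"

definition hcat :: "real mat \<Rightarrow> real mat \<Rightarrow> real mat" where
  "hcat A B = mat (dim_row A) (dim_col A + dim_col B)
     (\<lambda>(i,j). if j < dim_col A then A $$ (i,j) else B $$ (i, j - dim_col A))"

fun hcat_list :: "nat \<Rightarrow> real mat list \<Rightarrow> real mat" where
  "hcat_list nr [] = 0\<^sub>m nr 0"
| "hcat_list nr (M # Ms) = hcat M (hcat_list nr Ms)"

definition controllable :: "real mat \<Rightarrow> real mat \<Rightarrow> bool" where
  "controllable A B \<longleftrightarrow>
     mat_rank (hcat_list (dim_row A) (map (\<lambda>k. A ^\<^sub>m k * B) [0..<dim_row A])) = dim_row A"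

text \<open>A signal z : nat => real vec, of dimension q, on [0,T-1].
  Block Hankel matrix H_L(z) of size qL x (T-L+1) with (r,c) block z(r+c).\<close>
definition hankel :: "nat \<Rightarrow> nat \<Rightarrow> nat \<Rightarrow> (nat \<Rightarrow> real vec) \<Rightarrow> real mat" where
  "hankel q L T z = mat (q * L) (T + 1 - L) (\<lambda>(r,c). z (r div q + c) $ (r mod q))"

definition hankel_mos :: "nat \<Rightarrow> nat \<Rightarrow> (nat \<Rightarrow> real) \<Rightarrow> (nat \<Rightarrow> nat) \<Rightarrow>
    (nat \<Rightarrow> nat \<Rightarrow> real vec) \<Rightarrow> nat list \<Rightarrow> real mat" where
  "hankel_mos q L \<alpha> T z is = hcat_list (q * L) (map (\<lambda>i. \<alpha> i \<cdot>\<^sub>m hankel q L (T i) (z i)) is)"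

definition hankel_cum :: "nat \<Rightarrow> nat \<Rightarrow> (nat \<Rightarrow> real) \<Rightarrow> nat \<Rightarrow>
    (nat \<Rightarrow> nat \<Rightarrow> real vec) \<Rightarrow> nat list \<Rightarrow> real mat" where
  "hankel_cum q L \<alpha> T0 z is = mat (q * L) (T0 + 1 - L)
     (\<lambda>(r,c). sum_list (map (\<lambda>i. \<alpha> i * hankel q L T0 (z i) $$ (r,c)) is))"

definition hankel_hyb :: "nat \<Rightarrow> nat \<Rightarrow> (nat \<Rightarrow> real) \<Rightarrow> nat \<Rightarrow> (nat \<Rightarrow> nat) \<Rightarrow>
    (nat \<Rightarrow> nat \<Rightarrow> real vec) \<Rightarrow> nat \<Rightarrow> nat \<Rightarrow> real mat" where
  "hankel_hyb q L \<alpha> T0 T z pb p =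
     hcat (hankel_cum q L \<alpha> T0 z [0..<pb]) (hankel_mos q L \<alpha> T z [pb..<p])"

definition MCPE :: "nat \<Rightarrow> nat \<Rightarrow> (nat \<Rightarrow> nat) \<Rightarrow> (nat \<Rightarrow> nat \<Rightarrow> real vec) \<Rightarrow> nat \<Rightarrow> bool" where
  "MCPE m K T u p \<longleftrightarrow> (\<forall>\<beta>. (\<forall>i<p. \<beta> i \<noteq> 0) \<longrightarrow>
      mat_rank (hankel_mos m K \<beta> T u [0..<p]) = m * K)"

definition CCPE :: "nat \<Rightarrow> nat \<Rightarrow> nat \<Rightarrow> (nat \<Rightarrow> nat \<Rightarrow> real vec) \<Rightarrow> nat \<Rightarrow> bool" where
  "CCPE m K T0 u p \<longleftrightarrow> (\<forall>\<beta>. (\<forall>i<p. \<beta> i \<noteq> 0) \<longrightarrow>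
      mat_rank (hankel_cum m K \<beta> T0 u [0..<p]) = m * K)"

definition HCPE :: "nat \<Rightarrow> nat \<Rightarrow> nat \<Rightarrow> (nat \<Rightarrow> nat) \<Rightarrow> (nat \<Rightarrow> nat \<Rightarrow> real vec) \<Rightarrow>
    nat \<Rightarrow> nat \<Rightarrow> bool" where
  "HCPE m K T0 T u pb p \<longleftrightarrow> (\<forall>\<beta>. (\<forall>i<p. \<beta> i \<noteq> 0) \<longrightarrow>
      mat_rank (hankel_hyb m K \<beta> T0 T u pb p) = m * K)"

definition is_traj :: "nat \<Rightarrow> nat \<Rightarrow> real mat \<Rightarrow> real mat \<Rightarrow> nat \<Rightarrow>
    (nat \<Rightarrow> real vec) \<Rightarrow> (nat \<Rightarrow> real vec) \<Rightarrow> bool" where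
  "is_traj n m A B T x u \<longleftrightarrow>
     (\<forall>k<T. x k \<in> carrier_vec n \<and> u k \<in> carrier_vec m) \<and>
     (\<forall>k. k + 1 < T \<longrightarrow> x (k + 1) = A *\<^sub>v x k + B *\<^sub>v u k)"

definition stack :: "nat \<Rightarrow> nat \<Rightarrow> (nat \<Rightarrow> real vec) \<Rightarrow> real vec" where
  "stack q L z = vec (q * L) (\<lambda>r. z (r div q) $ (r mod q))"

end

theory Submission
  imports Defs
begin

lemma full_rank_surj:
  fixes M :: "real mat"
  assumes M: "M \<in> carrier_mat N k" and r: "mat_rank M = N" and v: "v \<in> carrier_vec N"
  shows "\<exists>g\<in>carrier_vec k. M *\<^sub>v g = v"
proof -
  interpret vs: vec_space "TYPE(real)" N .
  obtain S where S: "maximal S (\<lambda>T. T \<subseteq> set (cols M) \<and> vs.lin_indpt T)"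
    using maximal_exists[of "(\<lambda>T. T \<subseteq> set (cols M) \<and> vs.lin_indpt T)" "card (set (cols M))" "{}"]
    by (meson List.finite_set card_mono empty_iff empty_subsetI vs.finite_lin_indpt2 rev_finite_subset)
  have rk: "vs.rank M = card S" using vs.rank_card_indpt[OF M S] .
  have dr: "dim_row M = N" using M by auto
  have cS: "card S = N" using rk r unfolding mat_rank_def dr by simp
  have Ssub: "S \<subseteq> set (cols M)" and li: "vs.lin_indpt S" using S unfolding maximal_def by auto
  have colsC: "set (cols M) \<subseteq> carrier_vec N" using M cols_dim by blast
  have SC: "S \<subseteq> carrier_vec N" using Ssub colsC by auto
  have finS: "finite S" using Ssub finite_subset by blast
  have "vs.basis S"
    by (rule vs.dim_li_is_basis) (use finS SC li cS vs.dim_is_n in auto)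
  hence spS: "vs.span S = carrier_vec N" unfolding vs.basis_def by auto
  have "vs.span S \<subseteq> vs.span (set (cols M))" using vs.span_is_monotone[OF Ssub] .
  hence "v \<in> vs.col_space M" using v spS unfolding vs.col_space_def by auto
  thus ?thesis using vs.col_space_eq[OF M] M by auto
qed

lemma self_scalar_zero:
  fixes z :: "real vec"
  assumes "z \<in> carrier_vec N" "z \<bullet> z = 0"
  shows "z = 0\<^sub>v N"
proof -
  have "(\<Sum>i\<in>{0..<N}. z $ i * z $ i) = 0" using assms unfolding scalar_prod_def by auto
  hence "\<forall>i\<in>{0..<N}. z $ i * z $ i = 0"
    by (subst (asm) sum_nonneg_eq_0_iff) auto
  thus ?thesis using assms by (intro eq_vecI) auto
qed

lemma full_rank_left_kernel:
  fixes M :: "real mat"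
  assumes M: "M \<in> carrier_mat N k" and r: "mat_rank M = N" and z: "z \<in> carrier_vec N"
    and orth: "\<forall>j<k. col M j \<bullet> z = 0"
  shows "z = 0\<^sub>v N"
proof -
  obtain g where g: "g \<in> carrier_vec k" "M *\<^sub>v g = z" using full_rank_surj[OF M r z] by blast
  have t: "transpose_mat M *\<^sub>v z = 0\<^sub>v k"
    using orth M z by (intro eq_vecI) (auto simp: mult_mat_vec_def)
  have "z \<bullet> z = z \<bullet> (M *\<^sub>v g)" using g by simp
  also have "\<dots> = (transpose_mat M *\<^sub>v z) \<bullet> g" using transpose_vec_mult_scalar[OF M g(1) z] by simp
  also have "\<dots> = 0" unfolding t using g by simp
  finally show ?thesis using self_scalar_zero z by blast
qed

lemma smult_one_mat_vec:
  fixes v :: "real vec"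
  assumes "v \<in> carrier_vec N"
  shows "(d \<cdot>\<^sub>m 1\<^sub>m N) *\<^sub>v v = d \<cdot>\<^sub>v v"
proof (intro eq_vecI)
  fix i assume "i < dim_vec (d \<cdot>\<^sub>v v)"
  hence i: "i < N" using assms by simp
  have "((d \<cdot>\<^sub>m 1\<^sub>m N) *\<^sub>v v) $ i = (\<Sum>j\<in>{0..<N}. (if i = j then d else 0) * v $ j)"
    using i assms by (simp add: mult_mat_vec_def scalar_prod_def) (rule sum.cong, auto)
  also have "\<dots> = (\<Sum>j\<in>{0..<N}. if i = j then d * v $ j else 0)" by (rule sum.cong) auto
  also have "\<dots> = d * v $ i" using i by simp
  finally show "((d \<cdot>\<^sub>m 1\<^sub>m N) *\<^sub>v v) $ i = (d \<cdot>\<^sub>v v) $ i" using i assms by simp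
qed (use assms in simp)

lemma dual_surj:
  fixes M :: "real mat"
  assumes M: "M \<in> carrier_mat N k"
    and inj: "\<forall>z\<in>carrier_vec N. (\<forall>j<k. col M j \<bullet> z = 0) \<longrightarrow> z = 0\<^sub>v N"
    and v: "v \<in> carrier_vec N"
  shows "\<exists>g\<in>carrier_vec k. M *\<^sub>v g = v"
proof -
  define G where "G = M * transpose_mat M"
  have G: "G \<in> carrier_mat N N" unfolding G_def using M by auto
  have d: "det G \<noteq> 0"
  proof
    assume "det G = 0"
    then obtain z where z: "z \<in> carrier_vec N" "z \<noteq> 0\<^sub>v N" "G *\<^sub>v z = 0\<^sub>v N"
      using det_0_iff_vec_prod_zero[OF G] by blast
    define w where "w = transpose_mat M *\<^sub>v z"
    have w: "w \<in> carrier_vec k" unfolding w_def using M by (intro carrier_vecI) auto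
    have "w \<bullet> w = z \<bullet> (M *\<^sub>v w)" unfolding w_def
      using transpose_vec_mult_scalar[OF M w z(1)] w_def by simp
    also have "M *\<^sub>v w = G *\<^sub>v z" unfolding w_def G_def using M z by (simp add: assoc_mult_mat_vec)
    also have "z \<bullet> (G *\<^sub>v z) = 0" using z by simp
    finally have "w = 0\<^sub>v k" using self_scalar_zero w by blast
    have "\<forall>j<k. col M j \<bullet> z = 0"
    proof (intro allI impI)
      fix j assume j: "j < k"
      have "w $ j = 0" using \<open>w = 0\<^sub>v k\<close> j by simp
      thus "col M j \<bullet> z = 0" unfolding w_def using j M by simp
    qed
    thus False using inj z by blast
  qed
  define g where "g = transpose_mat M *\<^sub>v (adj_mat G *\<^sub>v ((1 / det G) \<cdot>\<^sub>v v))"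
  have A: "adj_mat G \<in> carrier_mat N N" "G * adj_mat G = det G \<cdot>\<^sub>m 1\<^sub>m N" using adj_mat[OF G] by auto
  have y: "adj_mat G *\<^sub>v ((1 / det G) \<cdot>\<^sub>v v) \<in> carrier_vec N" using A v by auto
  have MT: "transpose_mat M \<in> carrier_mat k N" using M by auto
  have "M *\<^sub>v g = G *\<^sub>v (adj_mat G *\<^sub>v ((1 / det G) \<cdot>\<^sub>v v))"
    using assoc_mult_mat_vec[OF M MT y] unfolding g_def by (simp add: G_def)
  also have "\<dots> = (G * adj_mat G) *\<^sub>v ((1 / det G) \<cdot>\<^sub>v v)"
    using assoc_mult_mat_vec[OF G A(1), of "(1 / det G) \<cdot>\<^sub>v v"] v by simp
  also have "\<dots> = v" unfolding A(2) smult_one_mat_vec[OF smult_carrier_vec[THEN iffD2, OF v]] using v d by auto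
  finally have "M *\<^sub>v g = v" .
  moreover have "g \<in> carrier_vec k" unfolding g_def using M by (intro carrier_vecI) auto
  ultimately show ?thesis by blast
qed

lemma dependent_vecs:
  fixes ys :: "nat \<Rightarrow> real vec"
  shows "\<exists>a. (\<exists>k\<le>N. a k \<noteq> 0) \<and> (\<forall>i<N. (\<Sum>k\<le>N. a k * ys k $ i) = 0)"
proof -
  define C where "C = mat (Suc N) (Suc N) (\<lambda>(i,k). if i < N then ys k $ i else (0::real))"
  have C: "C \<in> carrier_mat (Suc N) (Suc N)" unfolding C_def by auto
  have CT: "transpose_mat C \<in> carrier_mat (Suc N) (Suc N)" using C by auto
  have u0: "transpose_mat C *\<^sub>v unit_vec (Suc N) N = 0\<^sub>v (Suc N)"
    unfolding C_def by (intro eq_vecI) (auto simp: mult_mat_vec_def scalar_prod_def unit_vec_def)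
  have u1: "unit_vec (Suc N) N \<noteq> 0\<^sub>v (Suc N)" by simp
  have "det (transpose_mat C) = 0"
    using det_0_iff_vec_prod_zero[OF CT] u0 u1 unit_vec_carrier by blast
  hence "det C = 0" using det_transpose[OF C] by simp
  then obtain a where a: "a \<in> carrier_vec (Suc N)" "a \<noteq> 0\<^sub>v (Suc N)" "C *\<^sub>v a = 0\<^sub>v (Suc N)"
    using det_0_iff_vec_prod_zero[OF C] by blast
  have "\<exists>k\<le>N. a $ k \<noteq> 0"
  proof (rule ccontr)
    assume "\<not> ?thesis"
    hence "a = 0\<^sub>v (Suc N)" using a(1) by (intro eq_vecI) auto
    thus False using a(2) by simp
  qed
  moreover have "(\<Sum>k\<le>N. a $ k * ys k $ i) = 0" if i: "i < N" for i
  proof -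
    have "(C *\<^sub>v a) $ i = 0" using a(3) i by simp
    moreover have "(C *\<^sub>v a) $ i = (\<Sum>k<Suc N. ys k $ i * a $ k)"
      using i a(1) unfolding C_def by (simp add: mult_mat_vec_def scalar_prod_def atLeast0LessThan)
    ultimately show ?thesis using lessThan_Suc_atMost by (simp add: mult.commute)
  qed
  ultimately show ?thesis by (intro exI[of _ "\<lambda>k. a $ k"]) auto
qed

lemma sum_lessThan_add: "(\<Sum>r<(a::nat)+b. f r) = (\<Sum>r<a. f r) + (\<Sum>r<b. f (a + r))"
  by (induction b) (auto simp: add.assoc)

lemma sum_blocks: "(\<Sum>r<(m::nat)*L. f r) = (\<Sum>l<L. \<Sum>b<m. f (l*m+b))"
proof (induction L)
  case (Suc L)
  have "m * Suc L = m * L + m" by simp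
  hence "(\<Sum>r<m*Suc L. f r) = (\<Sum>r<m*L. f r) + (\<Sum>b<m. f (m*L + b))"
    using sum_lessThan_add by metis
  thus ?case using Suc by (simp add: mult.commute)
qed simp

lemma scalar_prod_sum: "w \<in> carrier_vec N \<Longrightarrow> v \<bullet> w = (\<Sum>i<N. v $ i * w $ i)"
  unfolding scalar_prod_def by (simp add: atLeast0LessThan)

lemma stack_dot:
  assumes "\<eta> \<in> carrier_vec (m*L)"
  shows "\<eta> \<bullet> stack m L z = (\<Sum>l<L. \<Sum>b<m. \<eta> $ (l*m+b) * z l $ b)"
proof -
  have "\<eta> \<bullet> stack m L z = (\<Sum>r<m*L. \<eta> $ r * stack m L z $ r)"
    by (rule scalar_prod_sum) (simp add: stack_def)
  also have "\<dots> = (\<Sum>r<m*L. \<eta> $ r * z (r div m) $ (r mod m))"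
    by (rule sum.cong) (auto simp: stack_def)
  also have "\<dots> = (\<Sum>l<L. \<Sum>b<m. \<eta> $ (l*m+b) * z l $ b)"
    unfolding sum_blocks by (intro sum.cong refl) auto
  finally show ?thesis .
qed

fun Yv :: "real mat \<Rightarrow> real vec \<Rightarrow> nat \<Rightarrow> real vec" where
  "Yv A \<xi> 0 = \<xi>"
| "Yv A \<xi> (Suc k) = transpose_mat A *\<^sub>v Yv A \<xi> k"

lemma Yv_carrier: "A \<in> carrier_mat n n \<Longrightarrow> \<xi> \<in> carrier_vec n \<Longrightarrow> Yv A \<xi> k \<in> carrier_vec n"
  by (induction k) (auto intro: carrier_vecI)

lemma Yv_shift: "Yv A (transpose_mat A *\<^sub>v \<xi>) k = Yv A \<xi> (Suc k)"
  by (induction k) auto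

lemma dot_traj:
  assumes A: "A \<in> carrier_mat n n" and B: "B \<in> carrier_mat n m"
    and tr: "is_traj n m A B T X U"
  shows "c + k < T \<Longrightarrow> \<xi> \<in> carrier_vec n \<Longrightarrow> \<xi> \<bullet> X (c+k) =
     Yv A \<xi> k \<bullet> X c + (\<Sum>l<k. (transpose_mat B *\<^sub>v Yv A \<xi> (k-1-l)) \<bullet> U (c+l))"
proof (induction k arbitrary: \<xi>)
  case 0
  thus ?case by simp
next
  case (Suc k)
  have Xk: "X (c+k) \<in> carrier_vec n" and Uk: "U (c+k) \<in> carrier_vec m"
    using tr Suc.prems unfolding is_traj_def by auto
  have dyn: "X (c + Suc k) = A *\<^sub>v X (c+k) + B *\<^sub>v U (c+k)"
    using tr Suc.prems unfolding is_traj_def by (metis add_Suc_right Suc_eq_plus1)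
  have At: "transpose_mat A *\<^sub>v \<xi> \<in> carrier_vec n" using A by (intro carrier_vecI) auto
  have "\<xi> \<bullet> X (c + Suc k) = \<xi> \<bullet> (A *\<^sub>v X (c+k)) + \<xi> \<bullet> (B *\<^sub>v U (c+k))"
    unfolding dyn using A B Xk Uk Suc.prems(2) by (simp add: scalar_prod_add_distrib[of _ n])
  also have "\<xi> \<bullet> (A *\<^sub>v X (c+k)) = (transpose_mat A *\<^sub>v \<xi>) \<bullet> X (c+k)"
    using transpose_vec_mult_scalar[OF A Xk Suc.prems(2)] by simp
  also have "\<xi> \<bullet> (B *\<^sub>v U (c+k)) = (transpose_mat B *\<^sub>v \<xi>) \<bullet> U (c+k)"
    using transpose_vec_mult_scalar[OF B Uk Suc.prems(2)] by simp
  also have "(transpose_mat A *\<^sub>v \<xi>) \<bullet> X (c+k) = Yv A \<xi> (Suc k) \<bullet> X c +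
      (\<Sum>l<k. (transpose_mat B *\<^sub>v Yv A \<xi> (Suc k - 1 - l)) \<bullet> U (c+l))"
  proof -
    have "(transpose_mat A *\<^sub>v \<xi>) \<bullet> X (c+k) = Yv A \<xi> (Suc k) \<bullet> X c +
      (\<Sum>l<k. (transpose_mat B *\<^sub>v Yv A \<xi> (Suc (k-1-l))) \<bullet> U (c+l))"
      using Suc.IH[of "transpose_mat A *\<^sub>v \<xi>"] Suc.prems At by (simp add: Yv_shift)
    also have "(\<Sum>l<k. (transpose_mat B *\<^sub>v Yv A \<xi> (Suc (k-1-l))) \<bullet> U (c+l)) =
       (\<Sum>l<k. (transpose_mat B *\<^sub>v Yv A \<xi> (Suc k - 1 - l)) \<bullet> U (c+l))"
      by (intro sum.cong refl) (simp add: Suc_diff_Suc)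
    finally show ?thesis .
  qed
  finally show ?case by simp
qed

fun hdec :: "nat list \<Rightarrow> nat \<Rightarrow> nat \<times> nat" where
  "hdec [] j = (0, j)"
| "hdec (c # cs) j = (if j < c then (0, j) else (case hdec cs (j - c) of (i, j') \<Rightarrow> (Suc i, j')))"

lemma hcat_list_dims:
  assumes "\<forall>M\<in>set Ms. dim_row M = nr"
  shows "dim_row (hcat_list nr Ms) = nr \<and> dim_col (hcat_list nr Ms) = sum_list (map dim_col Ms)"
  using assms by (induction Ms) (auto simp: hcat_def)

lemma hcat_list_index:
  assumes "\<forall>M\<in>set Ms. dim_row M = nr" and "j < sum_list (map dim_col Ms)"
  shows "fst (hdec (map dim_col Ms) j) < length Ms \<and>
    snd (hdec (map dim_col Ms) j) < dim_col (Ms ! fst (hdec (map dim_col Ms) j)) \<and>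
    (\<forall>r<nr. hcat_list nr Ms $$ (r,j) = (Ms ! fst (hdec (map dim_col Ms) j)) $$ (r, snd (hdec (map dim_col Ms) j)))"
  using assms
proof (induction Ms arbitrary: j)
  case Nil
  then show ?case by simp
next
  case (Cons M Ms)
  have dims: "dim_row (hcat_list nr Ms) = nr" "dim_col (hcat_list nr Ms) = sum_list (map dim_col Ms)"
    using hcat_list_dims[of Ms nr] Cons.prems by auto
  have rM: "dim_row M = nr" using Cons.prems by simp
  show ?case
  proof (cases "j < dim_col M")
    case True
    thus ?thesis using rM dims Cons.prems by (auto simp: hcat_def)
  next
    case False
    define j2 where "j2 = j - dim_col M"
    have j2: "j2 < sum_list (map dim_col Ms)" using Cons.prems False unfolding j2_def by simp
    obtain i j' where hd: "hdec (map dim_col Ms) j2 = (i, j')" by (cases "hdec (map dim_col Ms) j2")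
    have IH: "i < length Ms \<and> j' < dim_col (Ms ! i) \<and> (\<forall>r<nr. hcat_list nr Ms $$ (r,j2) = (Ms ! i) $$ (r, j'))"
      using Cons.IH[OF _ j2] Cons.prems hd by simp
    have "hdec (map dim_col (M # Ms)) j = (Suc i, j')" using False hd unfolding j2_def by simp
    moreover have "hcat_list nr (M # Ms) $$ (r,j) = hcat_list nr Ms $$ (r,j2)" if "r < nr" for r
      using that False Cons.prems rM dims unfolding j2_def by (simp add: hcat_def)
    ultimately show ?thesis using IH by simp
  qed
qed

lemma hdec_surj:
  assumes "i < length cs" "c < cs ! i"
  shows "\<exists>j < sum_list cs. hdec cs j = (i, c)"
  using assms
proof (induction cs arbitrary: i)
  case Nil
  then show ?case by simp
next
  case (Cons c0 cs)
  show ?case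
  proof (cases i)
    case 0
    thus ?thesis using Cons.prems by (intro exI[of _ c]) auto
  next
    case (Suc i')
    then obtain j where j: "j < sum_list cs" "hdec cs j = (i', c)" using Cons by auto
    show ?thesis using j Suc by (intro exI[of _ "c0 + j"]) auto
  qed
qed

lemma powdot:
  assumes A: "A \<in> carrier_mat n n" and xi: "\<xi> \<in> carrier_vec n"
  shows "v \<in> carrier_vec n \<Longrightarrow> (A ^\<^sub>m k *\<^sub>v v) \<bullet> \<xi> = v \<bullet> Yv A \<xi> k"
proof (induction k arbitrary: v)
  case 0
  have "A ^\<^sub>m 0 = 1\<^sub>m n" using A by simp
  thus ?case using 0 by simp
next
  case (Suc k)
  have Av: "A *\<^sub>v v \<in> carrier_vec n" using A by (intro carrier_vecI) auto
  have Y: "Yv A \<xi> k \<in> carrier_vec n" using Yv_carrier[OF A xi] .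
  have "(A ^\<^sub>m Suc k *\<^sub>v v) = A ^\<^sub>m k *\<^sub>v (A *\<^sub>v v)"
    using assoc_mult_mat_vec[OF pow_carrier_mat[OF A, of k] A Suc.prems] by simp
  hence "(A ^\<^sub>m Suc k *\<^sub>v v) \<bullet> \<xi> = (A *\<^sub>v v) \<bullet> Yv A \<xi> k" using Suc.IH[OF Av] by simp
  also have "\<dots> = Yv A \<xi> k \<bullet> (A *\<^sub>v v)" using comm_scalar_prod[OF Av Y] .
  also have "\<dots> = (transpose_mat A *\<^sub>v Yv A \<xi> k) \<bullet> v" using transpose_vec_mult_scalar[OF A Suc.prems Y] by simp
  also have "\<dots> = v \<bullet> Yv A \<xi> (Suc k)"
  proof -
    have "transpose_mat A *\<^sub>v Yv A \<xi> k \<in> carrier_vec n" using A by (intro carrier_vecI) simp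
    from comm_scalar_prod[OF this Suc.prems] show ?thesis by simp
  qed
  finally show ?case .
qed

lemma kalman_kernel:
  assumes A: "A \<in> carrier_mat n n" and B: "B \<in> carrier_mat n m" and ctrl: "controllable A B"
    and xi: "\<xi> \<in> carrier_vec n"
    and z: "\<forall>j b. b < m \<longrightarrow> (transpose_mat B *\<^sub>v Yv A \<xi> j) $ b = 0"
  shows "\<xi> = 0\<^sub>v n"
proof -
  define Ms where "Ms = map (\<lambda>k. A ^\<^sub>m k * B) [0..<n]"
  define C where "C = hcat_list n Ms"
  have rows: "\<forall>M\<in>set Ms. dim_row M = n" unfolding Ms_def using A by auto
  have Cc: "C \<in> carrier_mat n (sum_list (map dim_col Ms))" unfolding C_def using hcat_list_dims[OF rows] by auto
  have rk: "mat_rank C = n" using ctrl A unfolding controllable_def C_def Ms_def by simp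
  show ?thesis
  proof (rule full_rank_left_kernel[OF Cc rk xi], intro allI impI)
    fix j assume j: "j < sum_list (map dim_col Ms)"
    obtain k j' where hd: "hdec (map dim_col Ms) j = (k, j')" by (cases "hdec (map dim_col Ms) j")
    have I: "k < length Ms \<and> j' < dim_col (Ms ! k) \<and> (\<forall>r<n. C $$ (r,j) = (Ms ! k) $$ (r, j'))"
      using hcat_list_index[OF rows j] hd unfolding C_def by simp
    have k: "k < n" and Mk: "Ms ! k = A ^\<^sub>m k * B" using I unfolding Ms_def by auto
    have j': "j' < m" using I Mk B by simp
    have cB: "col B j' \<in> carrier_vec n" using B by (intro carrier_vecI) simp
    have "col C j = A ^\<^sub>m k *\<^sub>v col B j'"
    proof (rule eq_vecI)
      show "dim_vec (col C j) = dim_vec (A ^\<^sub>m k *\<^sub>v col B j')" using Cc A by simp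
      fix r assume "r < dim_vec (A ^\<^sub>m k *\<^sub>v col B j')"
      hence r: "r < n" using A by simp
      have "col C j $ r = (A ^\<^sub>m k * B) $$ (r, j')" using I Mk r Cc j by simp
      also have "\<dots> = (A ^\<^sub>m k *\<^sub>v col B j') $ r" using r j' A B by simp
      finally show "col C j $ r = (A ^\<^sub>m k *\<^sub>v col B j') $ r" .
    qed
    hence "col C j \<bullet> \<xi> = col B j' \<bullet> Yv A \<xi> k" using powdot[OF A xi cB] by simp
    also have "\<dots> = (transpose_mat B *\<^sub>v Yv A \<xi> k) $ j'" using j' B by simp
    also have "\<dots> = 0" using z j' by simp
    finally show "col C j \<bullet> \<xi> = 0" .
  qed
qed


lemma core_kernel:
  fixes I :: "'i set" and Xs Us :: "'i \<Rightarrow> nat \<Rightarrow> real vec" and len :: "'i \<Rightarrow> nat"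
  assumes A: "A \<in> carrier_mat n n" and B: "B \<in> carrier_mat n m" and ctrl: "controllable A B"
    and L: "1 \<le> L"
    and tr: "\<forall>t\<in>I. is_traj n m A B (len t) (Xs t) (Us t)"
    and PE: "\<forall>\<eta>\<in>carrier_vec (m*(L+n)). (\<forall>t\<in>I. \<forall>c. c + (L+n) \<le> len t \<longrightarrow>
               \<eta> \<bullet> stack m (L+n) (\<lambda>k. Us t (c+k)) = 0) \<longrightarrow> \<eta> = 0\<^sub>v (m*(L+n))"
    and xi: "\<xi> \<in> carrier_vec n" and eta: "\<eta> \<in> carrier_vec (m*L)"
    and H: "\<forall>t\<in>I. \<forall>c. c + L \<le> len t \<longrightarrow> \<xi> \<bullet> Xs t c + \<eta> \<bullet> stack m L (\<lambda>k. Us t (c+k)) = 0"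
  shows "\<xi> = 0\<^sub>v n \<and> \<eta> = 0\<^sub>v (m*L)"
proof -
  define Bt where "Bt = transpose_mat B"
  define Y where "Y = Yv A \<xi>"
  have Yc: "Y k \<in> carrier_vec n" for k unfolding Y_def using Yv_carrier[OF A xi] .
  have BtY: "Bt *\<^sub>v Y k \<in> carrier_vec m" for k unfolding Bt_def using B by (intro carrier_vecI) auto
  define th where "th k l b = (if l < k then (Bt *\<^sub>v Y (k-1-l)) $ b
      else if l < k + L then \<eta> $ ((l-k)*m+b) else 0)" for k l b
  have E: "Y k \<bullet> Xs t c + (\<Sum>l<L+n. \<Sum>b<m. th k l b * Us t (c+l) $ b) = 0"
    if t: "t \<in> I" and c: "c + (L+n) \<le> len t" and k: "k \<le> n" for t c k
  proof -
    have trt: "is_traj n m A B (len t) (Xs t) (Us t)" using tr t by blast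
    have Uc: "Us t (c+l) \<in> carrier_vec m" if "l < L+n" for l
      using trt that c unfolding is_traj_def by auto
    have h1: "\<xi> \<bullet> Xs t (c+k) + \<eta> \<bullet> stack m L (\<lambda>i. Us t (c+k+i)) = 0"
      using H t c k by auto
    have h2: "\<xi> \<bullet> Xs t (c+k) = Y k \<bullet> Xs t c + (\<Sum>l<k. (Bt *\<^sub>v Y (k-1-l)) \<bullet> Us t (c+l))"
      unfolding Y_def Bt_def by (rule dot_traj[OF A B trt]) (use c k L xi in auto)
    have h3: "\<eta> \<bullet> stack m L (\<lambda>i. Us t (c+k+i)) = (\<Sum>l<L. \<Sum>b<m. \<eta> $ (l*m+b) * Us t (c+k+l) $ b)"
      using stack_dot[OF eta] by simp
    have h4: "(\<Sum>l<k. (Bt *\<^sub>v Y (k-1-l)) \<bullet> Us t (c+l)) = (\<Sum>l<k. \<Sum>b<m. (Bt *\<^sub>v Y (k-1-l)) $ b * Us t (c+l) $ b)"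
      by (intro sum.cong refl scalar_prod_sum Uc) (use k in auto)
    define F where "F l = (\<Sum>b<m. th k l b * Us t (c+l) $ b)" for l
    have nsplit: "L + n = k + (L + (n-k))" using k by simp
    have "(\<Sum>l<L+n. F l) = (\<Sum>l<k. F l) + (\<Sum>l<L. F (k+l)) + (\<Sum>l<n-k. F (k+(L+l)))"
      unfolding nsplit sum_lessThan_add by (simp add: add.assoc)
    also have "(\<Sum>l<n-k. F (k+(L+l))) = 0" unfolding F_def th_def by simp
    also have "(\<Sum>l<k. F l) = (\<Sum>l<k. \<Sum>b<m. (Bt *\<^sub>v Y (k-1-l)) $ b * Us t (c+l) $ b)"
      unfolding F_def th_def by simp
    also have "(\<Sum>l<L. F (k+l)) = (\<Sum>l<L. \<Sum>b<m. \<eta> $ (l*m+b) * Us t (c+k+l) $ b)"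
      unfolding F_def th_def by (intro sum.cong refl) (auto simp: add.assoc)
    finally have "(\<Sum>l<L+n. F l) = \<eta> \<bullet> stack m L (\<lambda>i. Us t (c+k+i)) + (\<Sum>l<k. (Bt *\<^sub>v Y (k-1-l)) \<bullet> Us t (c+l))"
      using h3 h4 by simp
    thus ?thesis using h1 h2 unfolding F_def by simp
  qed
  obtain a where a: "\<exists>k\<le>n. a k \<noteq> 0" and adep: "\<forall>i<n. (\<Sum>k\<le>n. a k * Y k $ i) = 0"
    using dependent_vecs[of n Y] by blast
  define es where "es = vec (m*(L+n)) (\<lambda>r. \<Sum>k\<le>n. a k * th k (r div m) (r mod m))"
  have es_c: "es \<in> carrier_vec (m*(L+n))" unfolding es_def by simp
  have "es \<bullet> stack m (L+n) (\<lambda>i. Us t (c+i)) = 0" if t: "t \<in> I" and c: "c + (L+n) \<le> len t" for t c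
  proof -
    have idx: "l*m+b < m*(L+n)" if "l < L+n" "b < m" for l b
    proof -
      have "l*m+b < l*m + m" using that by simp
      also have "\<dots> = (Suc l)*m" by simp
      also have "\<dots> \<le> (L+n)*m" using that by (intro mult_le_mono1) simp
      finally show ?thesis by (simp add: mult.commute)
    qed
    have "es \<bullet> stack m (L+n) (\<lambda>i. Us t (c+i)) = (\<Sum>l<L+n. \<Sum>b<m. es $ (l*m+b) * Us t (c+l) $ b)"
      using stack_dot[OF es_c] by simp
    also have "\<dots> = (\<Sum>l<L+n. \<Sum>b<m. (\<Sum>k\<le>n. a k * th k l b) * Us t (c+l) $ b)"
      unfolding es_def using idx by (intro sum.cong refl) auto
    also have "\<dots> = (\<Sum>l<L+n. \<Sum>b<m. \<Sum>k\<le>n. a k * th k l b * Us t (c+l) $ b)"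
      by (simp add: sum_distrib_right)
    also have "\<dots> = (\<Sum>l<L+n. \<Sum>k\<le>n. \<Sum>b<m. a k * th k l b * Us t (c+l) $ b)"
      by (rule sum.cong[OF refl], rule sum.swap)
    also have "\<dots> = (\<Sum>k\<le>n. \<Sum>l<L+n. \<Sum>b<m. a k * th k l b * Us t (c+l) $ b)"
      by (rule sum.swap)
    also have "\<dots> = (\<Sum>k\<le>n. a k * (\<Sum>l<L+n. \<Sum>b<m. th k l b * Us t (c+l) $ b))"
      by (simp add: sum_distrib_left mult.assoc)
    also have "\<dots> = (\<Sum>k\<le>n. a k * (- (Y k \<bullet> Xs t c)))"
    proof (intro sum.cong refl)
      fix k assume "k \<in> {..n}"
      hence "Y k \<bullet> Xs t c + (\<Sum>l<L+n. \<Sum>b<m. th k l b * Us t (c+l) $ b) = 0" using E[OF t c] by simp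
      hence "(\<Sum>l<L+n. \<Sum>b<m. th k l b * Us t (c+l) $ b) = - (Y k \<bullet> Xs t c)" by linarith
      thus "a k * (\<Sum>l<L+n. \<Sum>b<m. th k l b * Us t (c+l) $ b) = a k * (- (Y k \<bullet> Xs t c))" by simp
    qed
    also have "\<dots> = - (\<Sum>k\<le>n. \<Sum>i<n. a k * Y k $ i * Xs t c $ i)"
    proof -
      have "c < len t" using c L by simp
      hence "Xs t c \<in> carrier_vec n" using tr t unfolding is_traj_def by auto
      hence "Y k \<bullet> Xs t c = (\<Sum>i<n. Y k $ i * Xs t c $ i)" for k by (rule scalar_prod_sum)
      thus ?thesis by (simp add: sum_distrib_left sum_negf mult.assoc)
    qed
    also have "(\<Sum>k\<le>n. \<Sum>i<n. a k * Y k $ i * Xs t c $ i) = (\<Sum>i<n. (\<Sum>k\<le>n. a k * Y k $ i) * Xs t c $ i)"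
      by (simp add: sum_distrib_right) (rule sum.swap)
    also have "\<dots> = 0" using adep by simp
    finally show ?thesis by simp
  qed
  hence "es = 0\<^sub>v (m*(L+n))" using PE es_c by blast
  hence thz: "(\<Sum>k\<le>n. a k * th k l b) = 0" if "l < L+n" "b < m" for l b
  proof -
    have idx: "l*m+b < m*(L+n)"
    proof -
      have "l*m+b < l*m + m" using that by simp
      also have "\<dots> = (Suc l)*m" by simp
      also have "\<dots> \<le> (L+n)*m" using that by (intro mult_le_mono1) simp
      finally show ?thesis by (simp add: mult.commute)
    qed
    have "es $ (l*m+b) = 0" using \<open>es = 0\<^sub>v (m*(L+n))\<close> idx by simp
    thus ?thesis unfolding es_def using idx that by simp
  qed
  define K where "K = (GREATEST k. k \<le> n \<and> a k \<noteq> 0)"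
  have K: "K \<le> n" "a K \<noteq> 0"
    using GreatestI_nat[of "\<lambda>k. k \<le> n \<and> a k \<noteq> 0"] a unfolding K_def by blast+
  have Kmax: "a k = 0" if "K < k" "k \<le> n" for k
    using Greatest_le_nat[of "\<lambda>k. k \<le> n \<and> a k \<noteq> 0" k n] that unfolding K_def by fastforce
  have sumK: "(\<Sum>k\<le>n. a k * f k) = a K * f K + (\<Sum>k<K. a k * f k)" for f :: "nat \<Rightarrow> real"
  proof -
    have "(\<Sum>k\<le>n. a k * f k) = (\<Sum>k\<le>K. a k * f k)"
      using Kmax K(1) by (intro sum.mono_neutral_right) auto
    also have "\<dots> = a K * f K + (\<Sum>k<K. a k * f k)"
      by (simp add: lessThan_Suc_atMost[symmetric])
    finally show ?thesis .
  qed
  have eta0: "\<forall>b<m. \<eta> $ ((L-1-d)*m+b) = 0" if "d < L" for d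
    using that
  proof (induction d rule: less_induct)
    case (less d)
    define s where "s = L - 1 - d"
    have s: "s < L" using less.prems unfolding s_def by simp
    show ?case
    proof (intro allI impI)
      fix b assume b: "b < m"
      have "(\<Sum>k\<le>n. a k * th k (K+s) b) = 0" using thz[of "K+s" b] s K b by simp
      moreover have "(\<Sum>k<K. a k * th k (K+s) b) = 0"
      proof (intro sum.neutral ballI)
        fix k assume k: "k \<in> {..<K}"
        show "a k * th k (K+s) b = 0"
        proof (cases "K + s < k + L")
          case True
          define d' where "d' = L - 1 - (K + s - k)"
          have "d' < d" using k True s less.prems unfolding d'_def s_def by auto
          moreover have "L - 1 - d' = K + s - k" unfolding d'_def using True k by auto
          ultimately have "\<eta> $ ((K+s-k)*m+b) = 0" using less.IH[of d'] less.prems b by auto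
          thus ?thesis unfolding th_def using k by auto
        qed (use k in \<open>auto simp: th_def\<close>)
      qed
      ultimately have "a K * th K (K+s) b = 0" using sumK by simp
      hence "th K (K+s) b = 0" using K by simp
      thus "\<eta> $ ((L-1-d)*m+b) = 0" unfolding th_def s_def[symmetric] using s by simp
    qed
  qed
  have eta_z: "\<eta> = 0\<^sub>v (m*L)"
  proof (intro eq_vecI)
    fix r assume "r < dim_vec (0\<^sub>v (m*L))"
    hence r: "r < m*L" by simp
    hence m: "0 < m" by (cases m) auto
    have q: "r div m < L" using r by (metis less_mult_imp_div_less mult.commute)
    have "\<forall>b<m. \<eta> $ ((L-1-(L-1-r div m))*m + b) = 0"
      using eta0[of "L-1-r div m"] q L m by simp
    hence "\<eta> $ ((L-1-(L-1-r div m))*m + r mod m) = 0" using m by simp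
    moreover have "(L-1-(L-1-r div m))*m + r mod m = r" using q by simp
    ultimately show "\<eta> $ r = 0\<^sub>v (m*L) $ r" using r by simp
  qed (use eta in simp)
  have th_simp: "th k l b = (if l < k then (Bt *\<^sub>v Y (k-1-l)) $ b else 0)" if "b < m" for k l b
  proof -
    have "(l - k) * m + b < m * L" if "\<not> l < k" "l < k + L"
    proof -
      have "(l-k)*m + b < (l-k)*m + m" using \<open>b < m\<close> by simp
      also have "\<dots> = Suc (l-k) * m" by simp
      also have "\<dots> \<le> L * m" using that by (intro mult_le_mono1) simp
      finally show ?thesis by (simp add: mult.commute)
    qed
    thus ?thesis unfolding th_def eta_z by auto
  qed
  have BY1: "\<forall>b<m. (Bt *\<^sub>v Y j) $ b = 0" if "j < K" for j
    using that
  proof (induction j rule: less_induct)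
    case (less j)
    show ?case
    proof (intro allI impI)
      fix b assume b: "b < m"
      have "(\<Sum>k\<le>n. a k * th k (K-1-j) b) = 0" using thz[of "K-1-j" b] less.prems K b by simp
      moreover have "(\<Sum>k<K. a k * th k (K-1-j) b) = 0"
      proof (intro sum.neutral ballI)
        fix k assume k: "k \<in> {..<K}"
        show "a k * th k (K-1-j) b = 0"
        proof (cases "K - 1 - j < k")
          case True
          have "k - 1 - (K-1-j) < j" using True k less.prems by auto
          hence "(Bt *\<^sub>v Y (k - 1 - (K-1-j))) $ b = 0" using less.IH less.prems b by auto
          thus ?thesis using th_simp[OF b] True by simp
        qed (use th_simp[OF b] in simp)
      qed
      ultimately have "a K * th K (K-1-j) b = 0" using sumK by simp
      hence "th K (K-1-j) b = 0" using K by simp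
      moreover have "K - 1 - (K-1-j) = j" using less.prems by simp
      ultimately show "(Bt *\<^sub>v Y j) $ b = 0" using th_simp[OF b] less.prems by simp
    qed
  qed
  have Ylin: "\<forall>r<n. (\<Sum>k\<le>n. a k * Y (k+i) $ r) = 0" for i
  proof (induction i)
    case 0
    then show ?case using adep by simp
  next
    case (Suc i)
    show ?case
    proof (intro allI impI)
      fix r assume r: "r < n"
      have YS: "Y (k + Suc i) $ r = (\<Sum>s<n. transpose_mat A $$ (r,s) * Y (k+i) $ s)" for k
      proof -
        have "Y (k + Suc i) = transpose_mat A *\<^sub>v Y (k+i)" unfolding Y_def by simp
        thus ?thesis using r A Yc[of "k+i"] by (simp add: scalar_prod_sum[of _ n] row_def)
      qed
      have "(\<Sum>k\<le>n. a k * Y (k + Suc i) $ r) = (\<Sum>s<n. transpose_mat A $$ (r,s) * (\<Sum>k\<le>n. a k * Y (k+i) $ s))"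
      proof -
        have "(\<Sum>k\<le>n. a k * Y (k + Suc i) $ r) = (\<Sum>k\<le>n. \<Sum>s<n. a k * (transpose_mat A $$ (r,s) * Y (k+i) $ s))"
          unfolding YS by (simp add: sum_distrib_left)
        also have "\<dots> = (\<Sum>s<n. \<Sum>k\<le>n. a k * (transpose_mat A $$ (r,s) * Y (k+i) $ s))"
          by (rule sum.swap)
        also have "\<dots> = (\<Sum>s<n. transpose_mat A $$ (r,s) * (\<Sum>k\<le>n. a k * Y (k+i) $ s))"
          by (simp add: sum_distrib_left mult.left_commute)
        finally show ?thesis .
      qed
      also have "\<dots> = 0" using Suc by simp
      finally show "(\<Sum>k\<le>n. a k * Y (k + Suc i) $ r) = 0" .
    qed
  qed
  have BY2: "\<forall>b<m. (Bt *\<^sub>v Y j) $ b = 0" for j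
  proof (induction j rule: less_induct)
    case (less j)
    show ?case
    proof (cases "j < K")
      case True
      thus ?thesis using BY1 by blast
    next
      case False
      then obtain i where j: "j = K + i" by (metis le_add_diff_inverse not_less)
      show ?thesis
      proof (intro allI impI)
        fix b assume b: "b < m"
        have YK: "Y (K+i) $ r = - (1 / a K) * (\<Sum>k<K. a k * Y (k+i) $ r)" if r: "r < n" for r
        proof -
          have "a K * Y (K+i) $ r + (\<Sum>k<K. a k * Y (k+i) $ r) = 0"
            using Ylin[of i] r sumK[of "\<lambda>k. Y (k+i) $ r"] by simp
          thus ?thesis using K(2) by (simp add: field_simps)
        qed
        have rowB: "(Bt *\<^sub>v w) $ b = (\<Sum>r<n. Bt $$ (b,r) * w $ r)" if "w \<in> carrier_vec n" for w
          using b B that unfolding Bt_def by (simp add: scalar_prod_sum[of _ n] row_def)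
        have "(Bt *\<^sub>v Y j) $ b = (\<Sum>r<n. Bt $$ (b,r) * (- (1 / a K) * (\<Sum>k<K. a k * Y (k+i) $ r)))"
          unfolding rowB[OF Yc] j using YK by simp
        also have "\<dots> = - (1 / a K) * (\<Sum>k<K. a k * (\<Sum>r<n. Bt $$ (b,r) * Y (k+i) $ r))"
        proof -
          have "(\<Sum>r<n. Bt $$ (b,r) * (- (1 / a K) * (\<Sum>k<K. a k * Y (k+i) $ r))) =
              - (1 / a K) * (\<Sum>r<n. \<Sum>k<K. a k * (Bt $$ (b,r) * Y (k+i) $ r))"
            by (simp add: sum_distrib_left sum_negf mult.left_commute)
          also have "(\<Sum>r<n. \<Sum>k<K. a k * (Bt $$ (b,r) * Y (k+i) $ r)) = (\<Sum>k<K. \<Sum>r<n. a k * (Bt $$ (b,r) * Y (k+i) $ r))"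
            by (rule sum.swap)
          finally show ?thesis by (simp add: sum_distrib_left)
        qed
        also have "\<dots> = - (1 / a K) * (\<Sum>k<K. a k * (Bt *\<^sub>v Y (k+i)) $ b)"
          unfolding rowB[OF Yc] ..
        also have "\<dots> = 0" using less.IH j b by (simp add: sum.neutral)
        finally show "(Bt *\<^sub>v Y j) $ b = 0" .
      qed
    qed
  qed
  have "\<xi> = 0\<^sub>v n"
    by (rule kalman_kernel[OF A B ctrl xi]) (use BY2 in \<open>auto simp: Y_def Bt_def\<close>)
  thus ?thesis using eta_z by simp
qed

definition goodH :: "nat \<Rightarrow> nat \<Rightarrow> ('i \<Rightarrow> nat \<Rightarrow> real vec) \<Rightarrow> ('i \<Rightarrow> nat) \<Rightarrow> 'i set \<Rightarrow>
    real mat \<Rightarrow> (nat \<Rightarrow> 'i \<times> nat) \<Rightarrow> bool" where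
  "goodH q L Zs len I M dec \<longleftrightarrow> dim_row M = q * L \<and>
     (\<forall>j<dim_col M. fst (dec j) \<in> I \<and> snd (dec j) + L \<le> len (fst (dec j)) \<and>
        (\<forall>r<q*L. M $$ (r,j) = Zs (fst (dec j)) (snd (dec j) + r div q) $ (r mod q)))"

definition surjH :: "nat \<Rightarrow> ('i \<Rightarrow> nat) \<Rightarrow> 'i set \<Rightarrow> real mat \<Rightarrow> (nat \<Rightarrow> 'i \<times> nat) \<Rightarrow> bool" where
  "surjH L len I M dec \<longleftrightarrow> (\<forall>t\<in>I. \<forall>c. c + L \<le> len t \<longrightarrow> (\<exists>j<dim_col M. dec j = (t,c)))"

lemma goodH_D:
  assumes "goodH q L Zs len I M dec" "j < dim_col M"
  shows "fst (dec j) \<in> I" "snd (dec j) + L \<le> len (fst (dec j))"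
    "r < q*L \<Longrightarrow> M $$ (r,j) = Zs (fst (dec j)) (snd (dec j) + r div q) $ (r mod q)"
    "dim_row M = q*L"
  using assms unfolding goodH_def by blast+

lemma PE_from_rank:
  assumes g: "goodH q L Zs len I E dec" and rk: "mat_rank E = q*L"
  shows "\<forall>\<eta>\<in>carrier_vec (q*L). (\<forall>t\<in>I. \<forall>c. c + L \<le> len t \<longrightarrow>
           \<eta> \<bullet> stack q L (\<lambda>k. Zs t (c+k)) = 0) \<longrightarrow> \<eta> = 0\<^sub>v (q*L)"
proof (intro ballI impI)
  fix \<eta> :: "real vec" assume eta: "\<eta> \<in> carrier_vec (q*L)"
    and H: "\<forall>t\<in>I. \<forall>c. c + L \<le> len t \<longrightarrow> \<eta> \<bullet> stack q L (\<lambda>k. Zs t (c+k)) = 0"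
  have "dim_row E = q*L" using g unfolding goodH_def by blast
  hence E: "E \<in> carrier_mat (q*L) (dim_col E)" by (intro carrier_matI) auto
  show "\<eta> = 0\<^sub>v (q*L)"
  proof (rule full_rank_left_kernel[OF E rk eta], intro allI impI)
    fix j assume j: "j < dim_col E"
    define t where "t = fst (dec j)"
    define c where "c = snd (dec j)"
    have t: "t \<in> I" using goodH_D(1)[OF g j] unfolding t_def .
    have c: "c + L \<le> len t" using goodH_D(2)[OF g j] unfolding t_def c_def .
    have ent: "\<forall>r<q*L. E $$ (r,j) = Zs t (c + r div q) $ (r mod q)"
      using goodH_D(3)[OF g j] unfolding t_def c_def by blast
    have "col E j = stack q L (\<lambda>k. Zs t (c+k))"
    proof (rule eq_vecI)
      fix r assume "r < dim_vec (stack q L (\<lambda>k. Zs t (c+k)))"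
      hence r: "r < q*L" by (simp add: stack_def)
      have "dim_row E = q*L" using E by blast
      hence "col E j $ r = E $$ (r,j)" using j r by (intro index_col) auto
      also have "\<dots> = Zs t (c + r div q) $ (r mod q)" using ent r by blast
      also have "\<dots> = stack q L (\<lambda>k. Zs t (c+k)) $ r" using r by (simp add: stack_def)
      finally show "col E j $ r = stack q L (\<lambda>k. Zs t (c+k)) $ r" .
    qed (use E in \<open>simp add: stack_def\<close>)
    moreover have "stack q L (\<lambda>k. Zs t (c+k)) \<in> carrier_vec (q*L)" by (simp add: stack_def)
    ultimately have "col E j \<bullet> \<eta> = \<eta> \<bullet> stack q L (\<lambda>k. Zs t (c+k))"
      using comm_scalar_prod eta by metis
    thus "col E j \<bullet> \<eta> = 0" using H t c by simp
  qed
qed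

lemma mv_index:
  assumes "M \<in> carrier_mat nr K" "g \<in> carrier_vec K" "r < nr"
  shows "(M *\<^sub>v g) $ r = (\<Sum>j<K. M $$ (r,j) * g $ j)"
  using assms by (simp add: mult_mat_vec_def scalar_prod_def atLeast0LessThan)

lemma fund:
  fixes I :: "'i set" and Xs Us :: "'i \<Rightarrow> nat \<Rightarrow> real vec" and len :: "'i \<Rightarrow> nat"
  assumes A: "A \<in> carrier_mat n n" and B: "B \<in> carrier_mat n m" and ctrl: "controllable A B"
    and L: "1 \<le> L"
    and tr: "\<forall>t\<in>I. is_traj n m A B (len t) (Xs t) (Us t)"
    and PE: "\<forall>\<eta>\<in>carrier_vec (m*(L+n)). (\<forall>t\<in>I. \<forall>c. c + (L+n) \<le> len t \<longrightarrow>
               \<eta> \<bullet> stack m (L+n) (\<lambda>k. Us t (c+k)) = 0) \<longrightarrow> \<eta> = 0\<^sub>v (m*(L+n))"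
    and gx: "goodH n L Xs len I Dx dec" and gu: "goodH m L Us len I Du dec"
    and dc: "dim_col Du = dim_col Dx" and sj: "surjH L len I Dx dec"
    and xb: "is_traj n m A B L xb ub"
  shows "\<exists>g\<in>carrier_vec (dim_col Dx). stack n L xb @\<^sub>v stack m L ub = (Dx @\<^sub>r Du) *\<^sub>v g"
proof -
  define K where "K = dim_col Dx"
  define N where "N = n + m*L"
  define T where "T j = fst (dec j)" for j
  define C where "C j = snd (dec j)" for j
  have TC: "T j \<in> I" "C j + L \<le> len (T j)" if "j < K" for j
  proof -
    have j: "j < dim_col Dx" using that unfolding K_def .
    show "T j \<in> I" using goodH_D(1)[OF gx j] unfolding T_def .
    show "C j + L \<le> len (T j)" using goodH_D(2)[OF gx j] unfolding T_def C_def .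
  qed
  have Xc: "Xs (T j) (C j + k) \<in> carrier_vec n" "Us (T j) (C j + k) \<in> carrier_vec m" if "j < K" "k < L" for j k
    using tr TC[OF that(1)] that(2) unfolding is_traj_def by auto
  define Z where "Z = mat N K (\<lambda>(r,j). if r < n then Xs (T j) (C j) $ r
      else Us (T j) (C j + (r-n) div m) $ ((r-n) mod m))"
  have Z: "Z \<in> carrier_mat N K" unfolding Z_def by simp
  have inj: "\<forall>z\<in>carrier_vec N. (\<forall>j<K. col Z j \<bullet> z = 0) \<longrightarrow> z = 0\<^sub>v N"
  proof (intro ballI impI)
    fix z :: "real vec" assume z: "z \<in> carrier_vec N" and zo: "\<forall>j<K. col Z j \<bullet> z = 0"
    define \<xi> where "\<xi> = vec n (\<lambda>i. z $ i)"
    define \<eta> where "\<eta> = vec (m*L) (\<lambda>r. z $ (n+r))"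
    have xi: "\<xi> \<in> carrier_vec n" and eta: "\<eta> \<in> carrier_vec (m*L)" unfolding \<xi>_def \<eta>_def by auto
    have H: "\<forall>t\<in>I. \<forall>c. c + L \<le> len t \<longrightarrow> \<xi> \<bullet> Xs t c + \<eta> \<bullet> stack m L (\<lambda>k. Us t (c+k)) = 0"
    proof (intro ballI allI impI)
      fix t c assume t: "t \<in> I" and c: "c + L \<le> len t"
      obtain j where j: "j < K" "dec j = (t,c)" using sj t c unfolding surjH_def K_def by blast
      have Tj: "T j = t" "C j = c" using j unfolding T_def C_def by auto
      have X0: "Xs t c \<in> carrier_vec n" using Xc[OF j(1), of 0] L Tj by simp
      have "col Z j \<bullet> z = (\<Sum>r<N. col Z j $ r * z $ r)" using scalar_prod_sum[OF z] .
      also have "\<dots> = (\<Sum>r<n. col Z j $ r * z $ r) + (\<Sum>r<m*L. col Z j $ (n+r) * z $ (n+r))"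
        unfolding N_def sum_lessThan_add ..
      also have "(\<Sum>r<n. col Z j $ r * z $ r) = (\<Sum>r<n. \<xi> $ r * Xs t c $ r)"
        using j(1) Tj unfolding Z_def \<xi>_def N_def by (intro sum.cong refl) auto
      also have "\<dots> = \<xi> \<bullet> Xs t c" using scalar_prod_sum[OF X0] by simp
      also have "(\<Sum>r<m*L. col Z j $ (n+r) * z $ (n+r)) = (\<Sum>r<m*L. \<eta> $ r * stack m L (\<lambda>k. Us t (c+k)) $ r)"
        using j(1) Tj unfolding Z_def \<eta>_def N_def stack_def by (intro sum.cong refl) auto
      also have "\<dots> = \<eta> \<bullet> stack m L (\<lambda>k. Us t (c+k))"
        by (rule scalar_prod_sum[symmetric]) (simp add: stack_def)
      finally show "\<xi> \<bullet> Xs t c + \<eta> \<bullet> stack m L (\<lambda>k. Us t (c+k)) = 0" using zo j by simp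
    qed
    have "\<xi> = 0\<^sub>v n \<and> \<eta> = 0\<^sub>v (m*L)" by (rule core_kernel[OF A B ctrl L tr PE xi eta H])
    hence z1: "z $ i = 0" if "i < n" for i using that unfolding \<xi>_def
      by (metis index_vec index_zero_vec(1))
    have z2: "z $ (n + r) = 0" if "r < m*L" for r using that \<open>\<xi> = 0\<^sub>v n \<and> \<eta> = 0\<^sub>v (m*L)\<close> unfolding \<eta>_def
      by (metis index_vec index_zero_vec(1))
    show "z = 0\<^sub>v N"
    proof (intro eq_vecI)
      fix i assume "i < dim_vec (0\<^sub>v N)"
      hence i: "i < N" by simp
      show "z $ i = 0\<^sub>v N $ i"
      proof (cases "i < n")
        case True thus ?thesis using z1 i by simp
      next
        case False
        have "i - n < m*L" using False i unfolding N_def by simp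
        hence "z $ (n + (i - n)) = 0" using z2 by blast
        thus ?thesis using False i by simp
      qed
    qed (use z in simp)
  qed
  define w where "w = vec N (\<lambda>r. if r < n then xb 0 $ r else ub ((r-n) div m) $ ((r-n) mod m))"
  obtain g where g: "g \<in> carrier_vec K" "Z *\<^sub>v g = w"
    using dual_surj[OF Z inj, of w] unfolding w_def by auto
  have Zrow: "(Z *\<^sub>v g) $ r = (\<Sum>j<K. Z $$ (r,j) * g $ j)" if "r < N" for r
    using mv_index[OF Z g(1) that] .
  have WU: "(\<Sum>j<K. Us (T j) (C j + l) $ b * g $ j) = ub l $ b" if l: "l < L" and b: "b < m" for l b
  proof -
    define r where "r = n + (l*m + b)"
    have lm: "l*m + b < m*L"
    proof -
      have "l*m+b < l*m + m" using b by simp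
      also have "\<dots> = Suc l * m" by simp
      also have "\<dots> \<le> L*m" using l by (intro mult_le_mono1) simp
      finally show ?thesis by (simp add: mult.commute)
    qed
    hence r: "r < N" "\<not> r < n" "(r - n) div m = l" "(r-n) mod m = b" unfolding r_def N_def using b by auto
    have "(Z *\<^sub>v g) $ r = ub l $ b" using g(2) r unfolding w_def by simp
    moreover have "(Z *\<^sub>v g) $ r = (\<Sum>j<K. Us (T j) (C j + l) $ b * g $ j)"
      unfolding Zrow[OF r(1)] using r unfolding Z_def by (intro sum.cong refl) auto
    ultimately show ?thesis by simp
  qed
  have WX: "\<forall>a<n. (\<Sum>j<K. Xs (T j) (C j + k) $ a * g $ j) = xb k $ a" if "k < L" for k
    using that
  proof (induction k)
    case 0
    show ?case
    proof (intro allI impI)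
      fix a assume a: "a < n"
      have r: "a < N" unfolding N_def using a by simp
      have "(Z *\<^sub>v g) $ a = xb 0 $ a" using g(2) r a unfolding w_def by simp
      moreover have "(Z *\<^sub>v g) $ a = (\<Sum>j<K. Xs (T j) (C j + 0) $ a * g $ j)"
        unfolding Zrow[OF r] using r a unfolding Z_def by (intro sum.cong refl) auto
      ultimately show "(\<Sum>j<K. Xs (T j) (C j + 0) $ a * g $ j) = xb 0 $ a" by simp
    qed
  next
    case (Suc k)
    have kL: "k < L" using Suc.prems by simp
    show ?case
    proof (intro allI impI)
      fix a assume a: "a < n"
      have dyn: "Xs (T j) (C j + Suc k) $ a = (\<Sum>s<n. A $$ (a,s) * Xs (T j) (C j + k) $ s)
          + (\<Sum>b<m. B $$ (a,b) * Us (T j) (C j + k) $ b)" if j: "j < K" for j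
      proof -
        have "Suc (C j + k) < len (T j)" using TC[OF j] Suc.prems by simp
        hence "Xs (T j) (C j + Suc k) = A *\<^sub>v Xs (T j) (C j + k) + B *\<^sub>v Us (T j) (C j + k)"
          using tr TC[OF j] unfolding is_traj_def by auto
        thus ?thesis using a A B Xc[OF j kL]
          by (simp add: scalar_prod_sum[of _ n] scalar_prod_sum[of _ m] row_def)
      qed
      have xbS: "xb (Suc k) $ a = (\<Sum>s<n. A $$ (a,s) * xb k $ s) + (\<Sum>b<m. B $$ (a,b) * ub k $ b)"
      proof -
        have c: "xb k \<in> carrier_vec n" "ub k \<in> carrier_vec m" using xb kL unfolding is_traj_def by auto
        have "xb (Suc k) = A *\<^sub>v xb k + B *\<^sub>v ub k" using xb Suc.prems unfolding is_traj_def by auto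
        thus ?thesis using a A B c by (simp add: scalar_prod_sum[of _ n] scalar_prod_sum[of _ m] row_def)
      qed
      have "(\<Sum>j<K. Xs (T j) (C j + Suc k) $ a * g $ j) =
          (\<Sum>j<K. (\<Sum>s<n. A $$ (a,s) * Xs (T j) (C j + k) $ s) * g $ j)
        + (\<Sum>j<K. (\<Sum>b<m. B $$ (a,b) * Us (T j) (C j + k) $ b) * g $ j)"
      proof -
        have "(\<Sum>j<K. Xs (T j) (C j + Suc k) $ a * g $ j) = (\<Sum>j<K. ((\<Sum>s<n. A $$ (a,s) * Xs (T j) (C j + k) $ s)
          + (\<Sum>b<m. B $$ (a,b) * Us (T j) (C j + k) $ b)) * g $ j)"
          by (rule sum.cong[OF refl]) (use dyn in simp)
        thus ?thesis by (simp add: distrib_right sum.distrib)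
      qed
      also have "(\<Sum>j<K. (\<Sum>s<n. A $$ (a,s) * Xs (T j) (C j + k) $ s) * g $ j) =
          (\<Sum>s<n. A $$ (a,s) * (\<Sum>j<K. Xs (T j) (C j + k) $ s * g $ j))"
      proof -
        have "(\<Sum>j<K. (\<Sum>s<n. A $$ (a,s) * Xs (T j) (C j + k) $ s) * g $ j) =
            (\<Sum>j<K. \<Sum>s<n. A $$ (a,s) * (Xs (T j) (C j + k) $ s * g $ j))"
          by (simp add: sum_distrib_right mult.assoc)
        also have "\<dots> = (\<Sum>s<n. \<Sum>j<K. A $$ (a,s) * (Xs (T j) (C j + k) $ s * g $ j))"
          by (rule sum.swap)
        finally show ?thesis by (simp add: sum_distrib_left)
      qed
      also have "(\<Sum>j<K. (\<Sum>b<m. B $$ (a,b) * Us (T j) (C j + k) $ b) * g $ j) =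
          (\<Sum>b<m. B $$ (a,b) * (\<Sum>j<K. Us (T j) (C j + k) $ b * g $ j))"
      proof -
        have "(\<Sum>j<K. (\<Sum>b<m. B $$ (a,b) * Us (T j) (C j + k) $ b) * g $ j) =
            (\<Sum>j<K. \<Sum>b<m. B $$ (a,b) * (Us (T j) (C j + k) $ b * g $ j))"
          by (simp add: sum_distrib_right mult.assoc)
        also have "\<dots> = (\<Sum>b<m. \<Sum>j<K. B $$ (a,b) * (Us (T j) (C j + k) $ b * g $ j))"
          by (rule sum.swap)
        finally show ?thesis by (simp add: sum_distrib_left)
      qed
      also have "(\<Sum>s<n. A $$ (a,s) * (\<Sum>j<K. Xs (T j) (C j + k) $ s * g $ j)) = (\<Sum>s<n. A $$ (a,s) * xb k $ s)"
        using Suc.IH[OF kL] by simp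
      also have "(\<Sum>b<m. B $$ (a,b) * (\<Sum>j<K. Us (T j) (C j + k) $ b * g $ j)) = (\<Sum>b<m. B $$ (a,b) * ub k $ b)"
        using WU[OF kL] by simp
      finally show "(\<Sum>j<K. Xs (T j) (C j + Suc k) $ a * g $ j) = xb (Suc k) $ a" using xbS by simp
    qed
  qed
  have "dim_row Dx = n*L" using gx unfolding goodH_def by blast
  hence Dxc: "Dx \<in> carrier_mat (n*L) K" unfolding K_def by (intro carrier_matI) auto
  have "dim_row Du = m*L" using gu unfolding goodH_def by blast
  hence Duc: "Du \<in> carrier_mat (m*L) K" unfolding K_def using dc by (intro carrier_matI) auto
  have q: "r div q < L" if "r < q*L" for r q :: nat
    using that by (metis less_mult_imp_div_less mult.commute)
  have qm: "r mod q < q" if "r < q*L" for r q :: nat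
  proof -
    have "q \<noteq> 0" using that by (cases q) auto
    thus ?thesis by simp
  qed
  have "Dx *\<^sub>v g = stack n L xb"
  proof (intro eq_vecI)
    fix r assume "r < dim_vec (stack n L xb)"
    hence r: "r < n*L" by (simp add: stack_def mult.commute)
    have "(Dx *\<^sub>v g) $ r = (\<Sum>j<K. Dx $$ (r,j) * g $ j)"
      using mv_index[OF Dxc g(1) r] .
    also have "\<dots> = (\<Sum>j<K. Xs (T j) (C j + r div n) $ (r mod n) * g $ j)"
      using goodH_D(3)[OF gx, of _ r] r unfolding K_def T_def C_def by (intro sum.cong refl) auto
    also have "\<dots> = xb (r div n) $ (r mod n)" using WX[OF q] qm r by (simp add: mult.commute)
    finally show "(Dx *\<^sub>v g) $ r = stack n L xb $ r" using r by (simp add: stack_def mult.commute)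
  qed (use Dxc in \<open>simp add: stack_def mult.commute\<close>)
  moreover have "Du *\<^sub>v g = stack m L ub"
  proof (intro eq_vecI)
    fix r assume "r < dim_vec (stack m L ub)"
    hence r: "r < m*L" by (simp add: stack_def)
    have "(Du *\<^sub>v g) $ r = (\<Sum>j<K. Du $$ (r,j) * g $ j)"
      using mv_index[OF Duc g(1) r] .
    also have "\<dots> = (\<Sum>j<K. Us (T j) (C j + r div m) $ (r mod m) * g $ j)"
      using goodH_D(3)[OF gu, of _ r] dc r unfolding K_def T_def C_def by (intro sum.cong refl) auto
    also have "\<dots> = ub (r div m) $ (r mod m)" using WU q qm r by simp
    finally show "(Du *\<^sub>v g) $ r = stack m L ub $ r" using r by (simp add: stack_def)
  qed (use Duc in \<open>simp add: stack_def\<close>)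
  ultimately have fin: "stack n L xb @\<^sub>v stack m L ub = (Dx @\<^sub>r Du) *\<^sub>v g"
    using mat_mult_append[OF Dxc Duc g(1)] by simp
  have gK: "g \<in> carrier_vec (dim_col Dx)" using g(1) unfolding K_def .
  show ?thesis using fin gK by blast
qed

lemma hankel_index:
  "r < q*L \<Longrightarrow> c < T + 1 - L \<Longrightarrow> hankel q L T z $$ (r,c) = z (r div q + c) $ (r mod q)"
  "dim_row (hankel q L T z) = q*L" "dim_col (hankel q L T z) = T + 1 - L"
  unfolding hankel_def by auto

lemma div_mod_bounds:
  fixes r q L :: nat
  assumes "r < q*L"
  shows "r div q < L" "r mod q < q"
proof -
  show "r div q < L" using assms by (metis less_mult_imp_div_less mult.commute)
  have "q \<noteq> 0" using assms by (cases q) auto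
  thus "r mod q < q" by simp
qed

definition mosdec :: "nat \<Rightarrow> (nat \<Rightarrow> nat) \<Rightarrow> (nat \<Rightarrow> 'i) \<Rightarrow> nat list \<Rightarrow> nat \<Rightarrow> 'i \<times> nat" where
  "mosdec L T emb is j = (case hdec (map (\<lambda>i. T i + 1 - L) is) j of (i', c) \<Rightarrow> (emb (is ! i'), c))"

lemma hankel_mos_props:
  shows "dim_row (hankel_mos q L \<alpha> T z is) = q*L"
    "dim_col (hankel_mos q L \<alpha> T z is) = sum_list (map (\<lambda>i. T i + 1 - L) is)"
proof -
  define Ms where "Ms = map (\<lambda>i. \<alpha> i \<cdot>\<^sub>m hankel q L (T i) (z i)) is"
  have rows: "\<forall>M\<in>set Ms. dim_row M = q*L" unfolding Ms_def by (auto simp: hankel_index)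
  have "map dim_col Ms = map (\<lambda>i. T i + 1 - L) is" unfolding Ms_def by (simp add: hankel_index)
  thus "dim_row (hankel_mos q L \<alpha> T z is) = q*L"
    "dim_col (hankel_mos q L \<alpha> T z is) = sum_list (map (\<lambda>i. T i + 1 - L) is)"
    using hcat_list_dims[OF rows] unfolding hankel_mos_def Ms_def[symmetric] by auto
qed

lemma good_mos:
  fixes emb :: "nat \<Rightarrow> 'i"
  assumes Zs: "\<forall>i\<in>set is. Zs (emb i) = (\<lambda>k. \<alpha> i \<cdot>\<^sub>v z i k)"
    and len: "\<forall>i\<in>set is. len (emb i) = T i"
    and car: "\<forall>i\<in>set is. \<forall>k<T i. z i k \<in> carrier_vec q"
  shows "goodH q L Zs len (emb ` set is) (hankel_mos q L \<alpha> T z is) (mosdec L T emb is)"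
    "surjH L len (emb ` set is) (hankel_mos q L \<alpha> T z is) (mosdec L T emb is)"
proof -
  define Ms where "Ms = map (\<lambda>i. \<alpha> i \<cdot>\<^sub>m hankel q L (T i) (z i)) is"
  have rows: "\<forall>M\<in>set Ms. dim_row M = q*L" unfolding Ms_def by (auto simp: hankel_index)
  have mc: "map dim_col Ms = map (\<lambda>i. T i + 1 - L) is" unfolding Ms_def by (simp add: hankel_index)
  have H: "hankel_mos q L \<alpha> T z is = hcat_list (q*L) Ms" unfolding hankel_mos_def Ms_def ..
  show "goodH q L Zs len (emb ` set is) (hankel_mos q L \<alpha> T z is) (mosdec L T emb is)"
    unfolding goodH_def
  proof (intro conjI allI impI)
    show "dim_row (hankel_mos q L \<alpha> T z is) = q*L" by (rule hankel_mos_props)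
    fix j assume "j < dim_col (hankel_mos q L \<alpha> T z is)"
    hence j: "j < sum_list (map dim_col Ms)" unfolding hankel_mos_props mc .
    obtain i' c where hd: "hdec (map dim_col Ms) j = (i', c)" by (cases "hdec (map dim_col Ms) j")
    have I: "i' < length Ms \<and> c < dim_col (Ms ! i') \<and> (\<forall>r<q*L. hcat_list (q*L) Ms $$ (r,j) = (Ms ! i') $$ (r, c))"
      using hcat_list_index[OF rows j] hd by simp
    define i where "i = is ! i'"
    have i': "i' < length is" using I unfolding Ms_def by simp
    have i: "i \<in> set is" unfolding i_def using i' by simp
    have Mi: "Ms ! i' = \<alpha> i \<cdot>\<^sub>m hankel q L (T i) (z i)" unfolding Ms_def i_def using i' by simp
    have c: "c < T i + 1 - L" using I Mi by (simp add: hankel_index)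
    have dec: "mosdec L T emb is j = (emb i, c)" unfolding mosdec_def using hd mc i_def by simp
    show "fst (mosdec L T emb is j) \<in> emb ` set is" using dec i by simp
    show "snd (mosdec L T emb is j) + L \<le> len (fst (mosdec L T emb is j))" using dec len i c by simp
    fix r assume r: "r < q*L"
    have rb: "r div q < L" "r mod q < q" using div_mod_bounds[OF r] by auto
    have kc: "z i (c + r div q) \<in> carrier_vec q" using car i c rb by auto
    have "hankel_mos q L \<alpha> T z is $$ (r,j) = (\<alpha> i \<cdot>\<^sub>m hankel q L (T i) (z i)) $$ (r,c)"
      using I r Mi H by simp
    also have "\<dots> = \<alpha> i * z i (r div q + c) $ (r mod q)" using r c by (simp add: hankel_index)
    also have "\<dots> = Zs (emb i) (c + r div q) $ (r mod q)" using Zs i kc rb by (simp add: add.commute)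
    finally show "hankel_mos q L \<alpha> T z is $$ (r,j) = Zs (fst (mosdec L T emb is j)) (snd (mosdec L T emb is j) + r div q) $ (r mod q)"
      using dec by simp
  qed
  show "surjH L len (emb ` set is) (hankel_mos q L \<alpha> T z is) (mosdec L T emb is)"
    unfolding surjH_def
  proof (intro ballI allI impI)
    fix t c assume t: "t \<in> emb ` set is" and c: "c + L \<le> len t"
    then obtain i where i: "i \<in> set is" "t = emb i" by blast
    then obtain i' where i': "i' < length is" "is ! i' = i" by (meson in_set_conv_nth)
    have "c < map (\<lambda>i. T i + 1 - L) is ! i'" using i' c len i by simp
    then obtain j where j: "j < sum_list (map (\<lambda>i. T i + 1 - L) is)" "hdec (map (\<lambda>i. T i + 1 - L) is) j = (i', c)"
      using hdec_surj[of i' "map (\<lambda>i. T i + 1 - L) is" c] i' by auto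
    show "\<exists>j<dim_col (hankel_mos q L \<alpha> T z is). mosdec L T emb is j = (t, c)"
      using j i i' unfolding hankel_mos_props mosdec_def by auto
  qed
qed

lemma good_cum:
  assumes Zs: "Zs t0 = (\<lambda>k. vec q (\<lambda>a. sum_list (map (\<lambda>i. \<alpha> i * z i k $ a) is)))"
    and len: "len t0 = T0"
  shows "goodH q L Zs len {t0} (hankel_cum q L \<alpha> T0 z is) (\<lambda>j. (t0, j))"
    "surjH L len {t0} (hankel_cum q L \<alpha> T0 z is) (\<lambda>j. (t0, j))"
proof -
  show "goodH q L Zs len {t0} (hankel_cum q L \<alpha> T0 z is) (\<lambda>j. (t0, j))"
    unfolding goodH_def
  proof (intro conjI allI impI)
    show "dim_row (hankel_cum q L \<alpha> T0 z is) = q*L" unfolding hankel_cum_def by simp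
    fix j assume "j < dim_col (hankel_cum q L \<alpha> T0 z is)"
    hence j: "j < T0 + 1 - L" unfolding hankel_cum_def by simp
    show "fst (t0, j) \<in> {t0}" by simp
    show "snd (t0, j) + L \<le> len (fst (t0, j))" using j len by simp
    fix r assume r: "r < q*L"
    have rb: "r div q < L" "r mod q < q" using div_mod_bounds[OF r] by auto
    have "hankel_cum q L \<alpha> T0 z is $$ (r,j) = sum_list (map (\<lambda>i. \<alpha> i * hankel q L T0 (z i) $$ (r,j)) is)"
      unfolding hankel_cum_def using r j by simp
    also have "\<dots> = sum_list (map (\<lambda>i. \<alpha> i * z i (j + r div q) $ (r mod q)) is)"
      using r j by (intro arg_cong[where f = sum_list] map_cong refl) (simp add: hankel_index add.commute)
    also have "\<dots> = Zs t0 (j + r div q) $ (r mod q)" unfolding Zs using rb by simp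
    finally show "hankel_cum q L \<alpha> T0 z is $$ (r,j) = Zs (fst (t0, j)) (snd (t0, j) + r div q) $ (r mod q)"
      by simp
  qed
  show "surjH L len {t0} (hankel_cum q L \<alpha> T0 z is) (\<lambda>j. (t0, j))"
    unfolding surjH_def hankel_cum_def using len by auto
qed

lemma good_hcat:
  assumes g1: "goodH q L Zs len I1 M1 dec1" and g2: "goodH q L Zs len I2 M2 dec2"
    and k0: "dim_col M1 = k0"
  shows "goodH q L Zs len (I1 \<union> I2) (hcat M1 M2) (\<lambda>j. if j < k0 then dec1 j else dec2 (j - k0))"
proof -
  have r1: "dim_row M1 = q*L" and r2: "dim_row M2 = q*L" using g1 g2 unfolding goodH_def by blast+
  show ?thesis unfolding goodH_def
  proof (intro conjI allI impI)
    show "dim_row (hcat M1 M2) = q*L" using r1 by (simp add: hcat_def)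
    fix j assume "j < dim_col (hcat M1 M2)"
    hence j: "j < dim_col M1 + dim_col M2" by (simp add: hcat_def)
    show "fst (if j < k0 then dec1 j else dec2 (j - k0)) \<in> I1 \<union> I2"
      using goodH_D(1)[OF g1, of j] goodH_D(1)[OF g2, of "j - k0"] j k0 by auto
    show "snd (if j < k0 then dec1 j else dec2 (j - k0)) + L \<le> len (fst (if j < k0 then dec1 j else dec2 (j - k0)))"
      using goodH_D(2)[OF g1, of j] goodH_D(2)[OF g2, of "j - k0"] j k0 by auto
    fix r assume r: "r < q*L"
    show "hcat M1 M2 $$ (r,j) = Zs (fst (if j < k0 then dec1 j else dec2 (j - k0)))
        (snd (if j < k0 then dec1 j else dec2 (j - k0)) + r div q) $ (r mod q)"
    proof (cases "j < k0")
      case True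
      have "hcat M1 M2 $$ (r,j) = M1 $$ (r,j)" using True k0 r r1 j by (simp add: hcat_def)
      thus ?thesis using goodH_D(3)[OF g1, of j r] True k0 r by simp
    next
      case False
      have "hcat M1 M2 $$ (r,j) = M2 $$ (r,j - k0)" using False k0 r r1 j by (simp add: hcat_def)
      thus ?thesis using goodH_D(3)[OF g2, of "j - k0" r] False k0 r j by simp
    qed
  qed
qed

lemma surj_hcat:
  assumes s1: "surjH L len I1 M1 dec1" and s2: "surjH L len I2 M2 dec2"
    and k0: "dim_col M1 = k0"
  shows "surjH L len (I1 \<union> I2) (hcat M1 M2) (\<lambda>j. if j < k0 then dec1 j else dec2 (j - k0))"
  unfolding surjH_def
proof (intro ballI allI impI)
  fix t c assume t: "t \<in> I1 \<union> I2" and c: "c + L \<le> len t"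
  show "\<exists>j<dim_col (hcat M1 M2). (if j < k0 then dec1 j else dec2 (j - k0)) = (t, c)"
  proof (cases "t \<in> I1")
    case True
    then obtain j where "j < dim_col M1" "dec1 j = (t,c)" using s1 c unfolding surjH_def by blast
    thus ?thesis using k0 by (intro exI[of _ j]) (simp add: hcat_def)
  next
    case False
    hence "t \<in> I2" using t by simp
    then obtain j where "j < dim_col M2" "dec2 j = (t,c)" using s2 c unfolding surjH_def by blast
    thus ?thesis using k0 by (intro exI[of _ "k0 + j"]) (simp add: hcat_def)
  qed
qed

lemma traj_smult:
  assumes A: "A \<in> carrier_mat n n" and B: "B \<in> carrier_mat n m" and tr: "is_traj n m A B T x u"
  shows "is_traj n m A B T (\<lambda>k. a \<cdot>\<^sub>v x k) (\<lambda>k. a \<cdot>\<^sub>v u k)"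
  unfolding is_traj_def
proof (intro conjI allI impI)
  fix k assume k: "k < T"
  thus "a \<cdot>\<^sub>v x k \<in> carrier_vec n" "a \<cdot>\<^sub>v u k \<in> carrier_vec m" using tr unfolding is_traj_def by auto
next
  fix k assume k: "k + 1 < T"
  have c: "x k \<in> carrier_vec n" "u k \<in> carrier_vec m" using tr k unfolding is_traj_def by auto
  have eq: "x (k+1) = A *\<^sub>v x k + B *\<^sub>v u k" using tr k unfolding is_traj_def by auto
  have "A *\<^sub>v x k \<in> carrier_vec n" "B *\<^sub>v u k \<in> carrier_vec n" using A B by (auto intro!: carrier_vecI)
  hence "a \<cdot>\<^sub>v x (k+1) = a \<cdot>\<^sub>v (A *\<^sub>v x k) + a \<cdot>\<^sub>v (B *\<^sub>v u k)"
    unfolding eq by (rule smult_add_distrib_vec)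
  also have "\<dots> = A *\<^sub>v (a \<cdot>\<^sub>v x k) + B *\<^sub>v (a \<cdot>\<^sub>v u k)"
    using mult_mat_vec[OF A c(1)] mult_mat_vec[OF B c(2)] by simp
  finally show "a \<cdot>\<^sub>v x (k+1) = A *\<^sub>v (a \<cdot>\<^sub>v x k) + B *\<^sub>v (a \<cdot>\<^sub>v u k)" .
qed

lemma sum_list_sum_swap: "sum_list (map (\<lambda>i. \<Sum>s<N. f i s) xs) = (\<Sum>s<N. sum_list (map (\<lambda>i. f i s) xs))"
  by (induction xs) (auto simp: sum.distrib)

lemma sum_list_cmult: "sum_list (map (\<lambda>i. (c::real) * f i) xs) = c * sum_list (map f xs)"
  by (induction xs) (auto simp: distrib_left)

lemma traj_cum:
  assumes A: "A \<in> carrier_mat n n" and B: "B \<in> carrier_mat n m"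
    and tr: "\<forall>i\<in>set is. is_traj n m A B T (x i) (u i)"
  shows "is_traj n m A B T (\<lambda>k. vec n (\<lambda>a. sum_list (map (\<lambda>i. \<alpha> i * x i k $ a) is)))
      (\<lambda>k. vec m (\<lambda>b. sum_list (map (\<lambda>i. \<alpha> i * u i k $ b) is)))"
  unfolding is_traj_def
proof (intro conjI allI impI)
  fix k assume k: "k + 1 < T"
  define Xc where "Xc = vec n (\<lambda>a. sum_list (map (\<lambda>i. \<alpha> i * x i k $ a) is))"
  define Uc where "Uc = vec m (\<lambda>b. sum_list (map (\<lambda>i. \<alpha> i * u i k $ b) is))"
  have XU: "Xc \<in> carrier_vec n" "Uc \<in> carrier_vec m" unfolding Xc_def Uc_def by auto
  show "vec n (\<lambda>a. sum_list (map (\<lambda>i. \<alpha> i * x i (k+1) $ a) is)) = A *\<^sub>v Xc + B *\<^sub>v Uc"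
  proof (rule eq_vecI)
    fix a assume "a < dim_vec (A *\<^sub>v Xc + B *\<^sub>v Uc)"
    hence a: "a < n" using B by simp
    have ent: "x i (Suc k) $ a = (\<Sum>s<n. A $$ (a,s) * x i k $ s) + (\<Sum>b<m. B $$ (a,b) * u i k $ b)"
      if i: "i \<in> set is" for i
    proof -
      have c: "x i k \<in> carrier_vec n" "u i k \<in> carrier_vec m" using tr i k unfolding is_traj_def by auto
      have "x i (k+1) = A *\<^sub>v x i k + B *\<^sub>v u i k" using tr i k unfolding is_traj_def by auto
      thus ?thesis using a A B c by (simp add: scalar_prod_sum[of _ n] scalar_prod_sum[of _ m] row_def)
    qed
    have "sum_list (map (\<lambda>i. \<alpha> i * x i (k+1) $ a) is) =
        sum_list (map (\<lambda>i. (\<Sum>s<n. A $$ (a,s) * (\<alpha> i * x i k $ s)) + (\<Sum>b<m. B $$ (a,b) * (\<alpha> i * u i k $ b))) is)"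
      by (intro arg_cong[where f = sum_list] map_cong refl)
         (simp add: ent distrib_left sum_distrib_left mult.left_commute)
    also have "\<dots> = (\<Sum>s<n. A $$ (a,s) * Xc $ s) + (\<Sum>b<m. B $$ (a,b) * Uc $ b)"
      unfolding sum_list_addf sum_list_sum_swap sum_list_cmult Xc_def Uc_def by simp
    also have "\<dots> = (A *\<^sub>v Xc + B *\<^sub>v Uc) $ a"
      using a A B XU by (simp add: scalar_prod_sum[of _ n] scalar_prod_sum[of _ m] row_def)
    finally show "vec n (\<lambda>a. sum_list (map (\<lambda>i. \<alpha> i * x i (k+1) $ a) is)) $ a = (A *\<^sub>v Xc + B *\<^sub>v Uc) $ a"
      using a by simp
  qed (use A B in simp)
qed auto


theorem lemma2:
  fixes A B :: "real mat" and n m p L :: nat and T :: "nat \<Rightarrow> nat"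
    and x u :: "nat \<Rightarrow> nat \<Rightarrow> real vec" and \<alpha> :: "nat \<Rightarrow> real"
  assumes A: "A \<in> carrier_mat n n" and B: "B \<in> carrier_mat n m"
    and ctrl: "controllable A B"
    and trajs: "\<forall>i<p. is_traj n m A B (T i) (x i) (u i)"
    and len: "\<forall>i<p. L + n \<le> T i"
    and L: "1 \<le> L"
    and alpha: "\<forall>i<p. \<alpha> i \<noteq> 0"
  shows
    "(\<forall>T0. (\<forall>i<p. T i = T0) \<longrightarrow> CCPE m (L + n) T0 u p \<longrightarrow>
        (\<forall>xb ub. is_traj n m A B L xb ub \<longrightarrow>
          (\<exists>g. g \<in> carrier_vec (T0 + 1 - L) \<and>
             stack n L xb @\<^sub>v stack m L ub =
             (hankel_cum n L \<alpha> T0 x [0..<p] @\<^sub>r hankel_cum m L \<alpha> T0 u [0..<p]) *\<^sub>v g)))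
   \<and> (MCPE m (L + n) T u p \<longrightarrow>
        (\<forall>xb ub. is_traj n m A B L xb ub \<longrightarrow>
          (\<exists>g. g \<in> carrier_vec (dim_col (hankel_mos n L \<alpha> T x [0..<p])) \<and>
             stack n L xb @\<^sub>v stack m L ub =
             (hankel_mos n L \<alpha> T x [0..<p] @\<^sub>r hankel_mos m L \<alpha> T u [0..<p]) *\<^sub>v g)))
   \<and> (\<forall>T0 pb. pb \<le> p \<longrightarrow> (\<forall>i<pb. T i = T0) \<longrightarrow> HCPE m (L + n) T0 T u pb p \<longrightarrow>
        (\<forall>xb ub. is_traj n m A B L xb ub \<longrightarrow>
          (\<exists>g. g \<in> carrier_vec (dim_col (hankel_hyb n L \<alpha> T0 T x pb p)) \<and>
             stack n L xb @\<^sub>v stack m L ub =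
             (hankel_hyb n L \<alpha> T0 T x pb p @\<^sub>r hankel_hyb m L \<alpha> T0 T u pb p) *\<^sub>v g)))"
proof (intro conjI)
  have trs: "is_traj n m A B (T i) (x i) (u i)" if "i < p" for i using trajs that by blast
  show "\<forall>T0. (\<forall>i<p. T i = T0) \<longrightarrow> CCPE m (L + n) T0 u p \<longrightarrow>
        (\<forall>xb ub. is_traj n m A B L xb ub \<longrightarrow>
          (\<exists>g. g \<in> carrier_vec (T0 + 1 - L) \<and>
             stack n L xb @\<^sub>v stack m L ub =
             (hankel_cum n L \<alpha> T0 x [0..<p] @\<^sub>r hankel_cum m L \<alpha> T0 u [0..<p]) *\<^sub>v g))"
  proof (intro allI impI)
    fix T0 xb ub assume TT: "\<forall>i<p. T i = T0" and cc: "CCPE m (L + n) T0 u p"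
      and xb: "is_traj n m A B L xb ub"
    define Xc where "Xc = (\<lambda>(_::unit) k. vec n (\<lambda>a. sum_list (map (\<lambda>i. \<alpha> i * x i k $ a) [0..<p])))"
    define Uc where "Uc = (\<lambda>(_::unit) k. vec m (\<lambda>a. sum_list (map (\<lambda>i. \<alpha> i * u i k $ a) [0..<p])))"
    define len where "len = (\<lambda>_::unit. T0)"
    have tr0: "\<forall>i\<in>set [0..<p]. is_traj n m A B T0 (x i) (u i)" using trs TT by auto
    have tr: "\<forall>t\<in>{()}. is_traj n m A B (len t) (Xc t) (Uc t)"
      using traj_cum[OF A B tr0, of \<alpha>] unfolding Xc_def Uc_def len_def by simp
    have XcE: "Xc () = (\<lambda>k. vec n (\<lambda>a. sum_list (map (\<lambda>i. \<alpha> i * x i k $ a) [0..<p])))" unfolding Xc_def by simp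
    have UcE: "Uc () = (\<lambda>k. vec m (\<lambda>a. sum_list (map (\<lambda>i. \<alpha> i * u i k $ a) [0..<p])))" unfolding Uc_def by simp
    have lenE: "len () = T0" unfolding len_def by simp
    note gx = good_cum[of Xc "()" n \<alpha> x "[0..<p]" len T0 L, OF XcE lenE]
    note gu = good_cum[of Uc "()" m \<alpha> u "[0..<p]" len T0 L, OF UcE lenE]
    note ge = good_cum[of Uc "()" m \<alpha> u "[0..<p]" len T0 "L+n", OF UcE lenE]
    have rk: "mat_rank (hankel_cum m (L + n) \<alpha> T0 u [0..<p]) = m * (L + n)"
      using cc alpha unfolding CCPE_def by blast
    note PE = PE_from_rank[OF ge(1) rk]
    have dc: "dim_col (hankel_cum m L \<alpha> T0 u [0..<p]) = dim_col (hankel_cum n L \<alpha> T0 x [0..<p])"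
      unfolding hankel_cum_def by simp
    have "\<exists>g\<in>carrier_vec (dim_col (hankel_cum n L \<alpha> T0 x [0..<p])).
        stack n L xb @\<^sub>v stack m L ub = (hankel_cum n L \<alpha> T0 x [0..<p] @\<^sub>r hankel_cum m L \<alpha> T0 u [0..<p]) *\<^sub>v g"
      by (rule fund[OF A B ctrl L tr PE gx(1) gu(1) dc gx(2) xb])
    moreover have "dim_col (hankel_cum n L \<alpha> T0 x [0..<p]) = T0 + 1 - L" unfolding hankel_cum_def by simp
    ultimately show "\<exists>g. g \<in> carrier_vec (T0 + 1 - L) \<and>
             stack n L xb @\<^sub>v stack m L ub =
             (hankel_cum n L \<alpha> T0 x [0..<p] @\<^sub>r hankel_cum m L \<alpha> T0 u [0..<p]) *\<^sub>v g" by auto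
  qed
  show "MCPE m (L + n) T u p \<longrightarrow>
        (\<forall>xb ub. is_traj n m A B L xb ub \<longrightarrow>
          (\<exists>g. g \<in> carrier_vec (dim_col (hankel_mos n L \<alpha> T x [0..<p])) \<and>
             stack n L xb @\<^sub>v stack m L ub =
             (hankel_mos n L \<alpha> T x [0..<p] @\<^sub>r hankel_mos m L \<alpha> T u [0..<p]) *\<^sub>v g))"
  proof (intro allI impI)
    fix xb ub assume mc: "MCPE m (L + n) T u p" and xb: "is_traj n m A B L xb ub"
    define Xs where "Xs = (\<lambda>i k. \<alpha> i \<cdot>\<^sub>v x i k)"
    define Us where "Us = (\<lambda>i k. \<alpha> i \<cdot>\<^sub>v u i k)"
    have tr: "\<forall>t\<in>id ` set [0..<p]. is_traj n m A B (T t) (Xs t) (Us t)"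
      using traj_smult[OF A B trs] unfolding Xs_def Us_def by auto
    have XsE: "\<forall>i\<in>set [0..<p]. Xs (id i) = (\<lambda>k. \<alpha> i \<cdot>\<^sub>v x i k)" unfolding Xs_def by simp
    have UsE: "\<forall>i\<in>set [0..<p]. Us (id i) = (\<lambda>k. \<alpha> i \<cdot>\<^sub>v u i k)" unfolding Us_def by simp
    have lenE: "\<forall>i\<in>set [0..<p]. T (id i) = T i" by simp
    have cx: "\<forall>i\<in>set [0..<p]. \<forall>k<T i. x i k \<in> carrier_vec n" using trs unfolding is_traj_def by auto
    have cu: "\<forall>i\<in>set [0..<p]. \<forall>k<T i. u i k \<in> carrier_vec m" using trs unfolding is_traj_def by auto
    note gx = good_mos[where emb=id and Zs=Xs and len=T and T=T and z=x and q=n and L=L and \<alpha>=\<alpha>, OF XsE lenE cx]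
    note gu = good_mos[where emb=id and Zs=Us and len=T and T=T and z=u and q=m and L=L and \<alpha>=\<alpha>, OF UsE lenE cu]
    note ge = good_mos[where emb=id and Zs=Us and len=T and T=T and z=u and q=m and L="L+n" and \<alpha>=\<alpha>, OF UsE lenE cu]
    have rk: "mat_rank (hankel_mos m (L + n) \<alpha> T u [0..<p]) = m * (L + n)"
      using mc alpha unfolding MCPE_def by blast
    note PE = PE_from_rank[OF ge(1) rk]
    have dc: "dim_col (hankel_mos m L \<alpha> T u [0..<p]) = dim_col (hankel_mos n L \<alpha> T x [0..<p])"
      unfolding hankel_mos_props ..
    have "\<exists>g\<in>carrier_vec (dim_col (hankel_mos n L \<alpha> T x [0..<p])).
        stack n L xb @\<^sub>v stack m L ub = (hankel_mos n L \<alpha> T x [0..<p] @\<^sub>r hankel_mos m L \<alpha> T u [0..<p]) *\<^sub>v g"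
      by (rule fund[OF A B ctrl L tr PE gx(1) gu(1) dc gx(2) xb])
    thus "\<exists>g. g \<in> carrier_vec (dim_col (hankel_mos n L \<alpha> T x [0..<p])) \<and>
             stack n L xb @\<^sub>v stack m L ub =
             (hankel_mos n L \<alpha> T x [0..<p] @\<^sub>r hankel_mos m L \<alpha> T u [0..<p]) *\<^sub>v g" by auto
  qed
  show "\<forall>T0 pb. pb \<le> p \<longrightarrow> (\<forall>i<pb. T i = T0) \<longrightarrow> HCPE m (L + n) T0 T u pb p \<longrightarrow>
        (\<forall>xb ub. is_traj n m A B L xb ub \<longrightarrow>
          (\<exists>g. g \<in> carrier_vec (dim_col (hankel_hyb n L \<alpha> T0 T x pb p)) \<and>
             stack n L xb @\<^sub>v stack m L ub =
             (hankel_hyb n L \<alpha> T0 T x pb p @\<^sub>r hankel_hyb m L \<alpha> T0 T u pb p) *\<^sub>v g))"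
  proof (intro allI impI)
    fix T0 pb xb ub assume pb: "pb \<le> p" and TT: "\<forall>i<pb. T i = T0" and hc: "HCPE m (L + n) T0 T u pb p"
      and xb: "is_traj n m A B L xb ub"
    define Xs where "Xs = (\<lambda>t. case t of None \<Rightarrow> (\<lambda>k. vec n (\<lambda>a. sum_list (map (\<lambda>i. \<alpha> i * x i k $ a) [0..<pb])))
        | Some i \<Rightarrow> (\<lambda>k. \<alpha> i \<cdot>\<^sub>v x i k))"
    define Us where "Us = (\<lambda>t. case t of None \<Rightarrow> (\<lambda>k. vec m (\<lambda>a. sum_list (map (\<lambda>i. \<alpha> i * u i k $ a) [0..<pb])))
        | Some i \<Rightarrow> (\<lambda>k. \<alpha> i \<cdot>\<^sub>v u i k))"
    define len where "len = (\<lambda>t. case t of None \<Rightarrow> T0 | Some i \<Rightarrow> T i)"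
    have tr0: "\<forall>i\<in>set [0..<pb]. is_traj n m A B T0 (x i) (u i)" using trs TT pb by auto
    have tr: "\<forall>t\<in>{None} \<union> Some ` set [pb..<p]. is_traj n m A B (len t) (Xs t) (Us t)"
    proof
      fix t assume t: "t \<in> {None} \<union> Some ` set [pb..<p]"
      show "is_traj n m A B (len t) (Xs t) (Us t)"
      proof (cases t)
        case None
        thus ?thesis using traj_cum[OF A B tr0, of \<alpha>] unfolding Xs_def Us_def len_def by simp
      next
        case (Some i)
        hence "i < p" using t by auto
        thus ?thesis using traj_smult[OF A B trs[of i]] Some unfolding Xs_def Us_def len_def by simp
      qed
    qed
    have XsN: "Xs None = (\<lambda>k. vec n (\<lambda>a. sum_list (map (\<lambda>i. \<alpha> i * x i k $ a) [0..<pb])))" unfolding Xs_def by simp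
    have UsN: "Us None = (\<lambda>k. vec m (\<lambda>a. sum_list (map (\<lambda>i. \<alpha> i * u i k $ a) [0..<pb])))" unfolding Us_def by simp
    have lenN: "len None = T0" unfolding len_def by simp
    have XsS: "\<forall>i\<in>set [pb..<p]. Xs (Some i) = (\<lambda>k. \<alpha> i \<cdot>\<^sub>v x i k)" unfolding Xs_def by simp
    have UsS: "\<forall>i\<in>set [pb..<p]. Us (Some i) = (\<lambda>k. \<alpha> i \<cdot>\<^sub>v u i k)" unfolding Us_def by simp
    have lenS: "\<forall>i\<in>set [pb..<p]. len (Some i) = T i" unfolding len_def by simp
    have cx: "\<forall>i\<in>set [pb..<p]. \<forall>k<T i. x i k \<in> carrier_vec n" using trs unfolding is_traj_def by auto
    have cu: "\<forall>i\<in>set [pb..<p]. \<forall>k<T i. u i k \<in> carrier_vec m" using trs unfolding is_traj_def by auto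
    have k0: "dim_col (hankel_cum q L' \<alpha> T0 z [0..<pb]) = T0 + 1 - L'" for q L' z unfolding hankel_cum_def by simp
    note gxc = good_cum[of Xs None n \<alpha> x "[0..<pb]" len T0 L, OF XsN lenN]
    note gxm = good_mos[where emb=Some and Zs=Xs and len=len and T=T and z=x and q=n and L=L and \<alpha>=\<alpha>, OF XsS lenS cx]
    note guc = good_cum[of Us None m \<alpha> u "[0..<pb]" len T0 L, OF UsN lenN]
    note gum = good_mos[where emb=Some and Zs=Us and len=len and T=T and z=u and q=m and L=L and \<alpha>=\<alpha>, OF UsS lenS cu]
    note gec = good_cum[of Us None m \<alpha> u "[0..<pb]" len T0 "L+n", OF UsN lenN]
    note gem = good_mos[where emb=Some and Zs=Us and len=len and T=T and z=u and q=m and L="L+n" and \<alpha>=\<alpha>, OF UsS lenS cu]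
    have gx: "goodH n L Xs len ({None} \<union> Some ` set [pb..<p]) (hankel_hyb n L \<alpha> T0 T x pb p)
        (\<lambda>j. if j < T0 + 1 - L then (None, j) else mosdec L T Some [pb..<p] (j - (T0 + 1 - L)))"
      unfolding hankel_hyb_def by (rule good_hcat[OF gxc(1) gxm(1) k0])
    have gu: "goodH m L Us len ({None} \<union> Some ` set [pb..<p]) (hankel_hyb m L \<alpha> T0 T u pb p)
        (\<lambda>j. if j < T0 + 1 - L then (None, j) else mosdec L T Some [pb..<p] (j - (T0 + 1 - L)))"
      unfolding hankel_hyb_def by (rule good_hcat[OF guc(1) gum(1) k0])
    have ge: "goodH m (L+n) Us len ({None} \<union> Some ` set [pb..<p]) (hankel_hyb m (L+n) \<alpha> T0 T u pb p)
        (\<lambda>j. if j < T0 + 1 - (L+n) then (None, j) else mosdec (L+n) T Some [pb..<p] (j - (T0 + 1 - (L+n))))"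
      unfolding hankel_hyb_def by (rule good_hcat[OF gec(1) gem(1) k0])
    have sj: "surjH L len ({None} \<union> Some ` set [pb..<p]) (hankel_hyb n L \<alpha> T0 T x pb p)
        (\<lambda>j. if j < T0 + 1 - L then (None, j) else mosdec L T Some [pb..<p] (j - (T0 + 1 - L)))"
      unfolding hankel_hyb_def by (rule surj_hcat[OF gxc(2) gxm(2) k0])
    have rk: "mat_rank (hankel_hyb m (L + n) \<alpha> T0 T u pb p) = m * (L + n)"
      using hc alpha unfolding HCPE_def by blast
    note PE = PE_from_rank[OF ge rk]
    have dc: "dim_col (hankel_hyb m L \<alpha> T0 T u pb p) = dim_col (hankel_hyb n L \<alpha> T0 T x pb p)"
      unfolding hankel_hyb_def by (simp add: hcat_def hankel_mos_props k0)
    have "\<exists>g\<in>carrier_vec (dim_col (hankel_hyb n L \<alpha> T0 T x pb p)).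
        stack n L xb @\<^sub>v stack m L ub = (hankel_hyb n L \<alpha> T0 T x pb p @\<^sub>r hankel_hyb m L \<alpha> T0 T u pb p) *\<^sub>v g"
      by (rule fund[OF A B ctrl L tr PE gx gu dc sj xb])
    thus "\<exists>g. g \<in> carrier_vec (dim_col (hankel_hyb n L \<alpha> T0 T x pb p)) \<and>
             stack n L xb @\<^sub>v stack m L ub =
             (hankel_hyb n L \<alpha> T0 T x pb p @\<^sub>r hankel_hyb m L \<alpha> T0 T u pb p) *\<^sub>v g" by auto
  qed
qed

end
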